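(* Let $P$ be a poset. If $P$ is well-quasi-ordered and the quasi-ordered set $(S_\omega(P);\leq_{dom})$ is better-quasi-ordered, then $P$ is better-quasi-ordered.
   Context: $S_\omega(P)$ is the set of strictly increasing sequences $x_0<x_1<\cdots$ of elements of $P$, each identified with its set of terms. For subsets $X,Y\subseteq P$, $X\leq_{dom} Y$ means that for every $x\in X$ there is $y\in Y$ with $x\leq y$ (a quasi-order). A quasi-ordered set is well-quasi-ordered (wqo) if it is well-founded and has no infinite antichain. Barriers and bqo: finite subsets of $\mathbb{N}$ are identified with their increasing enumerations. For finite $s,t\subseteq\mathbb{N}$ write $s\triangleleft t$ if there is a finite $r\subseteq\mathbb{N}$ such that $s$ is a proper initial segment of $r$ and $t$ is $r$ with its least element removed. A barrier is an infinite set $B$ of finite subsets of $\mathbb{N}$, no member of which is a proper subset of another, such that every infinite $X\subseteq\bigcup B$ has a nonempty initial segment belonging to $B$. A barrier is well-ordered by the lexicographic order; its order type is the type of this well-order. A map $f$ from a barrier $B$ into a quasi-ordered set $Q$ is good if there exist $s,t\in B$ with $s\triangleleft t$ and $f(s)\leq f(t)$, and bad otherwise. For a countable ordinal $\alpha$, $Q$ is $\alpha$-better-quasi-ordered ($\alpha$-bqo) if every map from a barrier of order type at most $\alpha$ into $Q$ is good; $Q$ is better-quasi-ordered (bqo) if it is $\alpha$-bqo for every countable ordinal $\alpha$. *)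

theory Defs
  imports Main
begin

definition wqo_on :: "'q set \<Rightarrow> ('q \<Rightarrow> 'q \<Rightarrow> bool) \<Rightarrow> bool" where
  "wqo_on A le \<longleftrightarrow>
     wfp_on A (\<lambda>x y. le x y \<and> \<not> le y x) \<and>
     \<not> (\<exists>C. C \<subseteq> A \<and> infinite C \<and> (\<forall>x\<in>C. \<forall>y\<in>C. x \<noteq> y \<longrightarrow> \<not> le x y))"

definition init_seg :: "nat set \<Rightarrow> nat set \<Rightarrow> bool" where
  "init_seg s X \<longleftrightarrow> s \<subseteq> X \<and> (\<forall>x\<in>X. \<forall>y\<in>s. x \<le> y \<longrightarrow> x \<in> s)"

definition barrier :: "nat set set \<Rightarrow> bool" where
  "barrier B \<longleftrightarrow> infinite B \<and> (\<forall>s\<in>B. finite s) \<and> (\<forall>s\<in>B. \<forall>t\<in>B. \<not> s \<subset> t) \<and>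
     (\<forall>X. X \<subseteq> \<Union>B \<and> infinite X \<longrightarrow> (\<exists>s\<in>B. s \<noteq> {} \<and> init_seg s X))"

definition shift :: "nat set \<Rightarrow> nat set \<Rightarrow> bool" where
  "shift s t \<longleftrightarrow> finite s \<and> finite t \<and>
     (\<exists>r. finite r \<and> init_seg s r \<and> s \<noteq> r \<and> t = r - {Min r})"

definition lex_rel :: "nat set set \<Rightarrow> nat set rel" where
  "lex_rel B = {(s, t). s \<in> B \<and> t \<in> B \<and>
     (s = t \<or> (sorted_list_of_set s, sorted_list_of_set t) \<in> lexord {(m, n). m < n})}"

definition good :: "('q \<Rightarrow> 'q \<Rightarrow> bool) \<Rightarrow> nat set set \<Rightarrow> (nat set \<Rightarrow> 'q) \<Rightarrow> bool" where
  "good le B f \<longleftrightarrow> (\<exists>s\<in>B. \<exists>t\<in>B. shift s t \<and> le (f s) (f t))"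

text \<open>alpha-bqo; the countable ordinal alpha is represented by a well-order on a subset of nat,
  and "order type at most alpha" by embeddability of the lexicographic well-order.\<close>
definition alpha_bqo :: "nat rel \<Rightarrow> 'q set \<Rightarrow> ('q \<Rightarrow> 'q \<Rightarrow> bool) \<Rightarrow> bool" where
  "alpha_bqo \<alpha> A le \<longleftrightarrow>
     (\<forall>B f. barrier B \<and> (lex_rel B, \<alpha>) \<in> ordLeq \<and> f ` B \<subseteq> A \<longrightarrow> good le B f)"

definition bqo_on :: "'q set \<Rightarrow> ('q \<Rightarrow> 'q \<Rightarrow> bool) \<Rightarrow> bool" where
  "bqo_on A le \<longleftrightarrow> (\<forall>\<alpha> :: nat rel. Well_order \<alpha> \<longrightarrow> alpha_bqo \<alpha> A le)"

definition S_omega :: "'a::order set \<Rightarrow> 'a set set" where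
  "S_omega P = {range x | x :: nat \<Rightarrow> 'a. (\<forall>i. x i \<in> P) \<and> strict_mono x}"

definition dom_le :: "'a::order set \<Rightarrow> 'a set \<Rightarrow> bool" where
  "dom_le X Y \<longleftrightarrow> (\<forall>x\<in>X. \<exists>y\<in>Y. x \<le> y)"

end

theory Submission
  imports Defs "HOL-Library.Ramsey" "HOL-Library.Countable_Set"
begin

definition above :: "nat set \<Rightarrow> nat set \<Rightarrow> nat set" where
  "above u Y = {n\<in>Y. \<forall>x\<in>u. x < n}"

definition nodes :: "nat set set \<Rightarrow> nat set set" where
  "nodes F = {w. \<exists>s\<in>F. init_seg w s}"

definition ext :: "nat set set \<Rightarrow> (nat set \<times> nat set) set" where
  "ext F = {(v, w). v \<in> nodes F \<and> init_seg w v \<and> w \<noteq> v}"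

definition front :: "nat set set \<Rightarrow> nat set \<Rightarrow> bool" where
  "front F X \<longleftrightarrow> infinite X \<and> (\<forall>s\<in>F. finite s \<and> s \<subseteq> X) \<and> (\<forall>s\<in>F. \<forall>t\<in>F. init_seg s t \<longrightarrow> s = t)
     \<and> (\<forall>Z. Z \<subseteq> X \<and> infinite Z \<longrightarrow> (\<exists>s\<in>F. init_seg s Z))"

lemma init_seg_subset: "init_seg s Z \<Longrightarrow> s \<subseteq> Z"
  unfolding init_seg_def by (rule conjunct1)

lemma init_seg_trans: "init_seg a b \<Longrightarrow> init_seg b c \<Longrightarrow> init_seg a c"
  unfolding init_seg_def by blast

lemma init_seg_sub: "init_seg s Z \<Longrightarrow> s \<subseteq> W \<Longrightarrow> W \<subseteq> Z \<Longrightarrow> init_seg s W"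
  unfolding init_seg_def by blast

lemma init_seg_refl: "init_seg s s"
  unfolding init_seg_def by blast

lemma init_seg_empty: "init_seg {} s"
  unfolding init_seg_def by blast

lemma init_seg_comparable:
  assumes "init_seg s Z" "init_seg w Z" shows "s \<subseteq> w \<or> w \<subseteq> s"
proof (rule ccontr)
  assume "\<not> ?thesis"
  then obtain x y where xy: "x \<in> s" "x \<notin> w" "y \<in> w" "y \<notin> s" by blast
  have "x \<in> Z" "y \<in> Z" using xy assms unfolding init_seg_def by blast+
  show False
  proof (cases "x \<le> y")
    case True then show False using assms(2) xy \<open>x \<in> Z\<close> unfolding init_seg_def by blast
  next
    case False then have "y \<le> x" by auto
    then show False using assms(1) xy \<open>y \<in> Z\<close> unfolding init_seg_def by blast
  qed
qed

lemma init_seg_insert: "\<forall>x\<in>w. x < n \<Longrightarrow> init_seg w (insert n w)"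
  unfolding init_seg_def by auto

lemma next_elem:
  assumes "init_seg w u" "w \<noteq> u" "finite u"
  defines "m \<equiv> Min (u - w)"
  shows "m \<in> u" "m \<notin> w" "\<forall>x\<in>w. x < m" "init_seg (insert m w) u" "\<forall>x\<in>u - insert m w. m < x"
proof -
  have ne: "u - w \<noteq> {}" using assms(1,2) unfolding init_seg_def by blast
  have fin: "finite (u - w)" using assms(3) by auto
  have m: "m \<in> u - w" using Min_in[OF fin ne] unfolding m_def .
  then show "m \<in> u" "m \<notin> w" by auto
  show lt: "\<forall>x\<in>w. x < m"
  proof
    fix x assume "x \<in> w"
    show "x < m"
    proof (rule ccontr)
      assume "\<not> x < m" then have "m \<le> x" by auto
      then have "m \<in> w" using assms(1) m \<open>x \<in> w\<close> unfolding init_seg_def by blast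
      then show False using m by blast
    qed
  qed
  have mle: "m \<le> x" if "x \<in> u - w" for x using Min_le[OF fin that] unfolding m_def .
  show "\<forall>x\<in>u - insert m w. m < x" using mle by force
  show "init_seg (insert m w) u"
    unfolding init_seg_def
  proof (intro conjI ballI impI)
    show "insert m w \<subseteq> u" using m assms(1) unfolding init_seg_def by blast
  next
    fix x y assume "x \<in> u" "y \<in> insert m w" "x \<le> y"
    show "x \<in> insert m w"
    proof (cases "x \<in> w")
      case False
      then have "m \<le> x" using mle \<open>x \<in> u\<close> by blast
      then show ?thesis using \<open>y \<in> insert m w\<close> \<open>x \<le> y\<close> lt by fastforce
    qed auto
  qed
qed

lemma front_nodes_sub:
  assumes "front F X" "w \<in> nodes F" shows "w \<subseteq> X \<and> finite w"
proof -
  obtain s where s: "s \<in> F" "init_seg w s" using assms(2) unfolding nodes_def by blast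
  have "finite s" "s \<subseteq> X" using assms(1) s(1) unfolding front_def by auto
  moreover have "w \<subseteq> s" using s(2) unfolding init_seg_def by blast
  ultimately show ?thesis using finite_subset by blast
qed

lemma infinite_above: "infinite X \<Longrightarrow> finite u \<Longrightarrow> infinite (above u X)"
proof -
  assume X: "infinite X" and u: "finite u"
  have "above u X = X - {..Max u}" if "u \<noteq> {}"
  proof -
    have "above u X = {n\<in>X. Max u < n}" using Max_less_iff[OF u that] unfolding above_def by auto
    also have "\<dots> = X - {..Max u}" by (simp add: set_eq_iff not_le)
    finally show ?thesis .
  qed
  moreover have "above {} X = X" unfolding above_def by auto
  moreover have "infinite (X - {..Max u})" using X by (simp add: finite_Diff2) 
  ultimately show ?thesis using X by (cases "u = {}") auto
qed

lemma above_sub: "above u Y \<subseteq> Y" unfolding above_def by auto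

lemma child_node:
  assumes fr: "front F X" and w: "w \<in> nodes F" "w \<notin> F" and n: "n \<in> X" "\<forall>x\<in>w. x < n"
  shows "insert n w \<in> nodes F"
proof -
  obtain t where t: "t \<in> F" "init_seg w t" using w(1) unfolding nodes_def by blast
  have wX: "w \<subseteq> X" using front_nodes_sub[OF fr w(1)] by blast
  have Xinf: "infinite X" using fr unfolding front_def by blast
  define Z where "Z = insert n w \<union> above {n} X"
  have ZX: "Z \<subseteq> X" using wX n unfolding Z_def above_def by auto
  have "infinite Z" using infinite_above[OF Xinf, of "{n}"] unfolding Z_def by auto
  then obtain s where s: "s \<in> F" "init_seg s Z" using fr ZX unfolding front_def by blast
  have wZ: "init_seg w Z"
    unfolding init_seg_def
  proof (intro conjI ballI impI)
    show "w \<subseteq> Z" unfolding Z_def by auto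
  next
    fix x y assume "x \<in> Z" "y \<in> w" "x \<le> y"
    then show "x \<in> w" using n(2) unfolding Z_def above_def by fastforce
  qed
  have "\<not> s \<subseteq> w"
  proof
    assume "s \<subseteq> w"
    then have "init_seg s w" using init_seg_sub[OF s(2)] wZ unfolding init_seg_def by blast
    then have "init_seg s t" using t(2) init_seg_trans by blast
    then have "s = t" using fr s(1) t(1) unfolding front_def by blast
    then have "w = s" using \<open>s \<subseteq> w\<close> t(2) unfolding init_seg_def by blast
    then show False using w(2) s(1) by blast
  qed
  then have ws: "w \<subseteq> s" "w \<noteq> s" using init_seg_comparable[OF s(2) wZ] by auto
  then obtain x where x: "x \<in> s" "x \<notin> w" by blast
  then have "x \<in> Z" using s(2) unfolding init_seg_def by blast
  then have "n \<le> x" using x unfolding Z_def above_def by auto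
  moreover have "n \<in> Z" unfolding Z_def by simp
  ultimately have ns: "n \<in> s" using s(2) x(1) unfolding init_seg_def by blast
  have "init_seg (insert n w) s"
    unfolding init_seg_def
  proof (intro conjI ballI impI)
    show "insert n w \<subseteq> s" using ns ws by blast
  next
    fix a b assume a: "a \<in> s" "b \<in> insert n w" "a \<le> b"
    have "a \<in> Z" using a(1) s(2) unfolding init_seg_def by blast
    have "b \<le> n" using a(2) n(2) by auto
    then show "a \<in> insert n w" using \<open>a \<in> Z\<close> a(3) unfolding Z_def above_def by auto
  qed
  then show ?thesis using s(1) unfolding nodes_def by blast
qed

lemma finite_sub_chain:
  fixes u :: "nat \<Rightarrow> nat set"
  assumes mono: "\<And>i j. i \<le> j \<Longrightarrow> u i \<subseteq> u j" and "finite s" and "s \<subseteq> (\<Union>i. u i)"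
  shows "\<exists>k. s \<subseteq> u k"
  using assms(2,3)
proof (induction s rule: finite_induct)
  case empty then show ?case by blast
next
  case (insert x s)
  then obtain k where k: "s \<subseteq> u k" by blast
  obtain i where i: "x \<in> u i" using insert.prems by blast
  have "insert x s \<subseteq> u (max i k)" using k i mono[of i "max i k"] mono[of k "max i k"] by auto
  then show ?case by blast
qed

lemma wf_ext:
  assumes fr: "front F X"
  shows "wf (ext F)"
proof (rule ccontr)
  assume "\<not> wf (ext F)"
  then obtain u where u: "\<And>i. (u (Suc i), u i) \<in> ext F" unfolding wf_iff_no_infinite_down_chain by blast
  have sub: "init_seg (u i) (u (Suc i))" "u i \<noteq> u (Suc i)" "u (Suc i) \<in> nodes F" for i
    using u[of i] unfolding ext_def by auto
  have monou: "u i \<subseteq> u j" if "i \<le> j" for i j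
    using that
  proof (induction j rule: dec_induct)
    case base then show ?case by simp
  next
    case (step j) then show ?case using sub(1)[of j] unfolding init_seg_def by blast
  qed
  have fin: "finite (u (Suc i))" "u (Suc i) \<subseteq> X" for i using front_nodes_sub[OF fr sub(3)] by auto
  have psub: "u i \<subset> u (Suc i)" for i using sub(1,2)[of i] unfolding init_seg_def by blast
  have card: "card (u (Suc i)) \<ge> i" for i
  proof (induction i)
    case 0 then show ?case by simp
  next
    case (Suc i)
    have "card (u (Suc i)) < card (u (Suc (Suc i)))" using psub[of "Suc i"] fin[of "Suc i"] by (simp add: psubset_card_mono)
    then show ?case using Suc by simp
  qed
  define Z where "Z = (\<Union>i. u i)"
  have ZX: "Z \<subseteq> X" unfolding Z_def
  proof
    fix x assume "x \<in> (\<Union>i. u i)"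
    then obtain i where "x \<in> u i" by blast
    then have "x \<in> u (Suc i)" using psub by blast
    then show "x \<in> X" using fin by blast
  qed
  have "infinite Z"
  proof
    assume "finite Z"
    have "card (u (Suc (Suc (card Z)))) \<le> card Z" using \<open>finite Z\<close> by (intro card_mono) (auto simp: Z_def)
    then show False using card[of "Suc (card Z)"] by simp
  qed
  then obtain s where s: "s \<in> F" "init_seg s Z" using fr ZX unfolding front_def by blast
  have "finite s" using fr s(1) unfolding front_def by blast
  moreover have "s \<subseteq> (\<Union>i. u i)" using init_seg_subset[OF s(2)] unfolding Z_def .
  ultimately have "\<exists>k. s \<subseteq> u k" by (intro finite_sub_chain[where u=u]) (auto intro: monou[THEN subsetD])
  then obtain k where k: "s \<subseteq> u k" ..
  have "u (Suc k) \<subseteq> Z" unfolding Z_def by blast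
  moreover have "s \<subseteq> u (Suc k)" using k psub[of k] by blast
  ultimately have "init_seg s (u (Suc k))" using init_seg_sub[OF s(2)] by blast
  moreover obtain t where t: "t \<in> F" "init_seg (u (Suc k)) t" using sub(3)[of k] unfolding nodes_def by blast
  ultimately have "init_seg s t" using init_seg_trans by blast
  then have "s = t" using fr s(1) t(1) unfolding front_def by blast
  then have "u (Suc k) \<subseteq> u k" using t(2) k unfolding init_seg_def by blast
  then show False using psub[of k] by blast
qed

lemma barrier_front: assumes "barrier B" shows "front B (\<Union>B)"
proof -
  have b1: "infinite B" and b2: "\<forall>s\<in>B. finite s" and b3: "\<forall>s\<in>B. \<forall>t\<in>B. \<not> s \<subset> t"
    and b4: "\<forall>X. X \<subseteq> \<Union>B \<and> infinite X \<longrightarrow> (\<exists>s\<in>B. s \<noteq> {} \<and> init_seg s X)"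
    using assms unfolding barrier_def by auto
  have "infinite (\<Union>B)" using b1 finite_UnionD by blast
  moreover have "\<forall>s\<in>B. finite s \<and> s \<subseteq> \<Union>B" using b2 by blast
  moreover have "\<forall>s\<in>B. \<forall>t\<in>B. init_seg s t \<longrightarrow> s = t" using b3 init_seg_subset by blast
  moreover have "\<forall>Z. Z \<subseteq> \<Union>B \<and> infinite Z \<longrightarrow> (\<exists>s\<in>B. init_seg s Z)" using b4 by blast
  ultimately show ?thesis unfolding front_def by blast
qed

lemma fusion:
  fixes Phi :: "nat \<Rightarrow> nat set \<Rightarrow> bool"
  assumes Y: "infinite Y"
    and hered: "\<And>n W W'. Phi n W \<Longrightarrow> W' \<subseteq> W \<Longrightarrow> Phi n W'"
    and ex: "\<And>n W. n \<in> Y \<Longrightarrow> W \<subseteq> Y \<Longrightarrow> infinite W \<Longrightarrow> \<exists>W'\<subseteq>W. infinite W' \<and> Phi n W'"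
  shows "\<exists>Z\<subseteq>Y. infinite Z \<and> (\<forall>n\<in>Z. Phi n (above {n} Z))"
proof -
  define mn where "mn V = (LEAST n::nat. n \<in> V)" for V
  have mn: "mn V \<in> V" "\<And>x. x \<in> V \<Longrightarrow> mn V \<le> x" if inf: "infinite V" for V
  proof -
    obtain x where "x \<in> V" using inf infinite_imp_nonempty by blast
    then show "mn V \<in> V" unfolding mn_def by (rule LeastI)
    show "\<And>x. x \<in> V \<Longrightarrow> mn V \<le> x" unfolding mn_def by (rule Least_le)
  qed
  define nxt where "nxt V = (SOME W'. W' \<subseteq> above {mn V} V \<and> infinite W' \<and> Phi (mn V) W')" for V
  define V where "V = rec_nat Y (\<lambda>_ V. nxt V)"
  have V0: "V 0 = Y" and VS: "V (Suc k) = nxt (V k)" for k by (simp_all add: V_def)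
  have nxtp: "nxt U \<subseteq> above {mn U} U \<and> infinite (nxt U) \<and> Phi (mn U) (nxt U)" if "U \<subseteq> Y" "infinite U" for U
  proof -
    have "mn U \<in> Y" using mn(1)[OF that(2)] that(1) by blast
    moreover have "above {mn U} U \<subseteq> Y" using that(1) above_sub by blast
    moreover have "infinite (above {mn U} U)" using infinite_above[OF that(2)] by simp
    ultimately have "\<exists>W'\<subseteq>above {mn U} U. infinite W' \<and> Phi (mn U) W'" using ex by blast
    then show ?thesis unfolding nxt_def by (rule someI2_ex) blast
  qed
  have inv: "V k \<subseteq> Y \<and> infinite (V k)" for k
  proof (induction k)
    case 0 show ?case using Y V0 by simp
  next
    case (Suc k)
    then show ?case using nxtp[of "V k"] above_sub[of "{mn (V k)}" "V k"] unfolding VS by blast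
  qed
  define n where "n k = mn (V k)" for k
  have nV: "n k \<in> V k" for k using mn(1) inv unfolding n_def by blast
  have Vsub: "V (Suc k) \<subseteq> above {n k} (V k)" "Phi (n k) (V (Suc k))" for k
    using nxtp[of "V k"] inv[of k] unfolding VS n_def by blast+
  have anti: "V j \<subseteq> V i" if "i \<le> j" for i j
    using that
  proof (induction j rule: dec_induct)
    case base then show ?case by simp
  next
    case (step j) then show ?case using Vsub(1)[of j] above_sub by blast
  qed
  have nlt: "n k < n (Suc k)" for k using nV[of "Suc k"] Vsub(1)[of k] unfolding above_def by blast
  have sm: "strict_mono n" using nlt by (simp add: strict_mono_Suc_iff)
  define Z where "Z = range n"
  have ZY: "Z \<subseteq> Y" unfolding Z_def using nV inv by blast
  have Zinf: "infinite Z" unfolding Z_def using range_inj_infinite strict_mono_imp_inj_on[OF sm] by blast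
  have "Phi z (above {z} Z)" if zZ: "z \<in> Z" for z
  proof -
    obtain k where k: "z = n k" using zZ unfolding Z_def by blast
    have "above {z} Z \<subseteq> V (Suc k)"
    proof
      fix m assume "m \<in> above {z} Z"
      then obtain j where j: "m = n j" "n k < n j" unfolding above_def Z_def k by auto
      then have "k < j" using sm strict_mono_less by blast
      then show "m \<in> V (Suc k)" using anti[of "Suc k" j] nV[of j] j(1) by auto
    qed
    then show ?thesis using hered[OF Vsub(2)[of k]] k by blast
  qed
  then show ?thesis using ZY Zinf by blast
qed

definition Mono :: "nat set set \<Rightarrow> (nat set \<Rightarrow> bool) \<Rightarrow> nat set \<Rightarrow> nat set \<Rightarrow> bool \<Rightarrow> bool" where
  "Mono F c w Y i \<longleftrightarrow> (\<forall>u\<in>F. init_seg w u \<and> u \<subseteq> w \<union> Y \<longrightarrow> c u = i)"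

lemma Mono_mono: "Mono F c w W i \<Longrightarrow> W' \<subseteq> W \<Longrightarrow> Mono F c w W' i"
  unfolding Mono_def by blast

lemma front_thin: "front F X \<Longrightarrow> s \<in> F \<Longrightarrow> t \<in> F \<Longrightarrow> init_seg s t \<Longrightarrow> s = t"
  unfolding front_def by blast

lemma front_fin: "front F X \<Longrightarrow> s \<in> F \<Longrightarrow> finite s"
  unfolding front_def by blast

lemma front_inf: "front F X \<Longrightarrow> infinite X"
  unfolding front_def by blast

lemma front_pre: "front F X \<Longrightarrow> Z \<subseteq> X \<Longrightarrow> infinite Z \<Longrightarrow> \<exists>s\<in>F. init_seg s Z"
  unfolding front_def by blast

lemma front_nodes_empty: "front F X \<Longrightarrow> {} \<in> nodes F"
proof -
  assume fr: "front F X"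
  then obtain s where "s \<in> F" using front_pre[OF fr subset_refl front_inf[OF fr]] by blast
  then show ?thesis unfolding nodes_def using init_seg_empty by blast
qed

lemma child_ext:
  assumes fr: "front F X" and w: "w \<in> nodes F" "w \<notin> F" and n: "n \<in> X" "\<forall>x\<in>w. x < n"
  shows "insert n w \<in> nodes F" "(insert n w, w) \<in> ext F"
proof -
  show c: "insert n w \<in> nodes F" by (rule child_node[OF fr w n])
  have "n \<notin> w" using n(2) by blast
  then show "(insert n w, w) \<in> ext F" unfolding ext_def using c init_seg_insert[OF n(2)] by auto
qed

lemma above_above: "\<forall>x\<in>w. x < n \<Longrightarrow> above {n} (above w Y) = above (insert n w) Y"
  unfolding above_def by auto

lemma front_partition:
  fixes c :: "nat set \<Rightarrow> bool"
  assumes fr: "front F X"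
  shows "\<exists>Y\<subseteq>X. infinite Y \<and> (\<exists>i. \<forall>u\<in>F. u \<subseteq> Y \<longrightarrow> c u = i)"
proof -
  have claim: "\<And>Y. w \<in> nodes F \<Longrightarrow> Y \<subseteq> X \<Longrightarrow> infinite Y \<Longrightarrow> Y \<subseteq> above w UNIV \<Longrightarrow>
      \<exists>Y'\<subseteq>Y. infinite Y' \<and> (\<exists>i. Mono F c w Y' i)" for w
    using wf_ext[OF fr]
  proof (induction w rule: wf_induct_rule)
    case (less w)
    show ?case
    proof (cases "w \<in> F")
      case True
      have "Mono F c w Y (c w)" unfolding Mono_def using True front_thin[OF fr] by blast
      then show ?thesis using less.prems by blast
    next
      case False
      have wX: "w \<subseteq> X" using front_nodes_sub[OF fr less.prems(1)] by blast
      have ch: "insert n w \<in> nodes F" "(insert n w, w) \<in> ext F" if nY: "n \<in> Y" for n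
      proof -
        have "n \<in> X" using nY less.prems(2) by blast
        moreover have "\<forall>x\<in>w. x < n" using nY less.prems(4) unfolding above_def by blast
        ultimately show "insert n w \<in> nodes F" "(insert n w, w) \<in> ext F"
          using child_ext[OF fr less.prems(1) False] by blast+
      qed
      have "\<exists>Z\<subseteq>Y. infinite Z \<and> (\<forall>n\<in>Z. (\<lambda>n W. \<exists>i. Mono F c (insert n w) W i) n (above {n} Z))"
      proof (rule fusion[OF less.prems(3), where Phi="\<lambda>n W. \<exists>i. Mono F c (insert n w) W i"])
        show "\<And>n W W'. \<exists>i. Mono F c (insert n w) W i \<Longrightarrow> W' \<subseteq> W \<Longrightarrow> \<exists>i. Mono F c (insert n w) W' i"
          using Mono_mono by blast
      next
        fix n W assume nW: "n \<in> Y" "W \<subseteq> Y" "infinite W"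
        have a1: "above {n} W \<subseteq> X" using nW(2) less.prems(2) above_sub by blast
        have a2: "infinite (above {n} W)" using infinite_above[OF nW(3)] by simp
        have a3: "above {n} W \<subseteq> above (insert n w) UNIV"
        proof
          fix x assume x: "x \<in> above {n} W"
          then have "x \<in> Y" "n < x" using nW(2) unfolding above_def by auto
          then have "\<forall>y\<in>w. y < x" using less.prems(4) unfolding above_def by blast
          then show "x \<in> above (insert n w) UNIV" using \<open>n < x\<close> unfolding above_def by simp
        qed
        have "\<exists>Y'\<subseteq>above {n} W. infinite Y' \<and> (\<exists>i. Mono F c (insert n w) Y' i)"
          by (rule less.IH[OF ch(2)[OF nW(1)] ch(1)[OF nW(1)] a1 a2 a3])
        then obtain Y' where "Y' \<subseteq> above {n} W" "infinite Y'" "\<exists>i. Mono F c (insert n w) Y' i"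
          by blast
        then show "\<exists>W'\<subseteq>W. infinite W' \<and> (\<exists>i. Mono F c (insert n w) W' i)" using above_sub by blast
      qed
      then obtain Z where Z: "Z \<subseteq> Y" "infinite Z" "\<And>n. n \<in> Z \<Longrightarrow> \<exists>i. Mono F c (insert n w) (above {n} Z) i"
        by auto
      define Zi where "Zi i = {n\<in>Z. Mono F c (insert n w) (above {n} Z) i}" for i
      have "Z = Zi True \<union> Zi False" unfolding Zi_def using Z(3) by (auto, metis (full_types))
      then obtain i where i: "infinite (Zi i)" using Z(2) by (metis infinite_Un)
      have "Mono F c w (Zi i) i"
        unfolding Mono_def
      proof (intro ballI impI)
        fix u assume u: "u \<in> F" "init_seg w u \<and> u \<subseteq> w \<union> Zi i"
        have "w \<noteq> u" using u(1) False by blast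
        moreover have fu: "finite u" using front_fin[OF fr u(1)] .
        define m where "m = Min (u - w)"
        note ne = next_elem[OF conjunct1[OF u(2)] \<open>w \<noteq> u\<close> fu, folded m_def]
        have mZ: "m \<in> Zi i" using ne(1,2) u(2) by blast
        have "u \<subseteq> insert m w \<union> above {m} Z"
        proof
          fix x assume x: "x \<in> u"
          show "x \<in> insert m w \<union> above {m} Z"
          proof (cases "x \<in> insert m w")
            case False
            then have "m < x" "x \<in> Z" using ne(5) x u(2) unfolding Zi_def by auto
            then show ?thesis unfolding above_def by auto
          qed auto
        qed
        then show "c u = i" using mZ ne(4) u(1) unfolding Zi_def Mono_def by blast
      qed
      moreover have "Zi i \<subseteq> Y" using Z(1) unfolding Zi_def by auto
      ultimately show ?thesis using i by blast
    qed
  qed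
  have "\<exists>Y'\<subseteq>X. infinite Y' \<and> (\<exists>i. Mono F c {} Y' i)"
    using claim[OF front_nodes_empty[OF fr] subset_refl front_inf[OF fr]] unfolding above_def by auto
  then show ?thesis unfolding Mono_def using init_seg_empty by auto
qed

abbreviation LT :: "(nat \<times> nat) set" where "LT \<equiv> {(m, n). m < n}"

lemma L_split:
  assumes "init_seg w s" "finite s"
  shows "sorted_list_of_set s = sorted_list_of_set w @ sorted_list_of_set (s - w)"
proof -
  have ws: "w \<subseteq> s" using init_seg_subset[OF assms(1)] .
  have fw: "finite w" using ws assms(2) finite_subset by blast
  have lt: "x < y" if "x \<in> w" "y \<in> s - w" for x y
  proof (rule ccontr)
    assume "\<not> x < y" then have "y \<le> x" by simp
    then have "y \<in> w" using assms(1) that unfolding init_seg_def by blast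
    then show False using that by blast
  qed
  show ?thesis
  proof (rule sorted_distinct_set_unique)
    show "sorted (sorted_list_of_set s)" "distinct (sorted_list_of_set s)" by simp_all
    show "sorted (sorted_list_of_set w @ sorted_list_of_set (s - w))"
      unfolding sorted_append using lt fw assms(2) by (auto intro: less_imp_le)
    show "distinct (sorted_list_of_set w @ sorted_list_of_set (s - w))"
      using fw assms(2) by auto
    show "set (sorted_list_of_set s) = set (sorted_list_of_set w @ sorted_list_of_set (s - w))"
      using fw assms(2) ws by auto
  qed
qed

lemma L_next:
  assumes "init_seg w s" "finite s" "w \<noteq> s"
  shows "\<exists>xs. sorted_list_of_set s = sorted_list_of_set w @ Min (s - w) # xs"
proof -
  have "s - w \<noteq> {}" using assms(1,3) init_seg_subset by blast
  then show ?thesis using L_split[OF assms(1,2)] sorted_list_of_set_nonempty[of "s - w"] assms(2) by auto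
qed

lemma front_lex_min:
  assumes fr: "front F X"
  shows "w \<in> nodes F \<Longrightarrow> S \<subseteq> {s\<in>F. init_seg w s} \<Longrightarrow> S \<noteq> {} \<Longrightarrow>
    \<exists>m\<in>S. \<forall>s\<in>S. s = m \<or> (sorted_list_of_set m, sorted_list_of_set s) \<in> lexord LT"
  using wf_ext[OF fr]
proof (induction w arbitrary: S rule: wf_induct_rule)
  case (less w)
  show ?case
  proof (cases "w \<in> F")
    case True
    have "\<forall>s\<in>S. s = w" using less.prems(2) True front_thin[OF fr] by blast
    moreover obtain s where s: "s \<in> S" using less.prems(3) by blast
    ultimately show ?thesis by (intro bexI[of _ s]) auto
  next
    case False
    define nx where "nx s = Min (s - w)" for s
    have sne: "s \<noteq> w" "finite s" "init_seg w s" "s \<in> F" if sS: "s \<in> S" for s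
      using sS less.prems(2) False front_fin[OF fr] by auto
    obtain s1 where s1: "s1 \<in> S" using less.prems(3) by blast
    obtain s0 where s0: "s0 \<in> S" and s0min: "\<And>s. s \<in> S \<Longrightarrow> nx s0 \<le> nx s"
      using ex_has_least_nat[of "\<lambda>s. s \<in> S" s1 nx] s1 by blast
    define n0 where "n0 = nx s0"
    define v where "v = insert n0 w"
    note ne0 = next_elem[OF sne(3)[OF s0] not_sym[OF sne(1)[OF s0]] sne(2)[OF s0]]
    have n0eq: "Min (s0 - w) = n0" unfolding n0_def nx_def ..
    have vnode: "v \<in> nodes F" using ne0(4) sne(4)[OF s0] unfolding v_def n0eq nodes_def by blast
    have "init_seg w v" unfolding v_def using init_seg_insert ne0(3) n0eq by metis
    moreover have "w \<noteq> v" unfolding v_def using ne0(2) n0eq by auto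
    ultimately have vext: "(v, w) \<in> ext F" using vnode unfolding ext_def by blast
    define S0 where "S0 = {s\<in>S. nx s = n0}"
    have S0sub: "S0 \<subseteq> {s\<in>F. init_seg v s}"
    proof
      fix s assume s: "s \<in> S0"
      then have sS: "s \<in> S" and sn: "Min (s - w) = n0" unfolding S0_def nx_def by auto
      note nes = next_elem[OF sne(3)[OF sS] not_sym[OF sne(1)[OF sS]] sne(2)[OF sS]]
      show "s \<in> {s\<in>F. init_seg v s}" using nes(4) sn sne(4)[OF sS] unfolding v_def by simp
    qed
    have S0ne: "S0 \<noteq> {}" using s0 unfolding S0_def n0_def by blast
    obtain m where m: "m \<in> S0" and mmin: "\<forall>s\<in>S0. s = m \<or> (sorted_list_of_set m, sorted_list_of_set s) \<in> lexord LT"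
      using less.IH[OF vext vnode S0sub S0ne] by blast
    have mS: "m \<in> S" and mn: "nx m = n0" using m unfolding S0_def by auto
    have "s = m \<or> (sorted_list_of_set m, sorted_list_of_set s) \<in> lexord LT" if sS: "s \<in> S" for s
    proof (cases "nx s = n0")
      case True then show ?thesis using mmin sS unfolding S0_def by blast
    next
      case False
      then have lt: "n0 < nx s" using s0min[OF sS] unfolding n0_def by simp
      obtain xs where xs: "sorted_list_of_set m = sorted_list_of_set w @ n0 # xs"
        using L_next[OF sne(3)[OF mS] sne(2)[OF mS] not_sym[OF sne(1)[OF mS]]] mn unfolding nx_def by blast
      obtain ys where ys: "sorted_list_of_set s = sorted_list_of_set w @ nx s # ys"
        using L_next[OF sne(3)[OF sS] sne(2)[OF sS] not_sym[OF sne(1)[OF sS]]] unfolding nx_def by blast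
      have "(sorted_list_of_set m, sorted_list_of_set s) \<in> lexord LT"
        unfolding xs ys by (rule lexord_append_left_rightI) (simp add: lt)
      then show ?thesis by blast
    qed
    then show ?thesis using mS by blast
  qed
qed

lemma lex_Field: "Field (lex_rel F) = F"
  unfolding lex_rel_def Field_def by auto

lemma front_lex_wo:
  assumes fr: "front F X"
  shows "Well_order (lex_rel F)"
proof -
  let ?L = "sorted_list_of_set"
  have irr: "(xs, xs) \<notin> lexord LT" for xs by (rule lexord_irreflexive) simp
  have trL: "trans (lexord LT)" by (rule lexord_transI) (auto simp: trans_def)
  have lin: "(xs, ys) \<in> lexord LT \<or> xs = ys \<or> (ys, xs) \<in> lexord LT" for xs ys
    by (rule lexord_linear) auto
  have inj: "s = t" if "s \<in> F" "t \<in> F" "?L s = ?L t" for s t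
  proof -
    have "finite s" "finite t" using that(1,2) front_fin[OF fr] by auto
    then show ?thesis using that(3) by (metis set_sorted_list_of_set)
  qed
  have lo: "Linear_order (lex_rel F)"
    unfolding lex_Field linear_order_on_def partial_order_on_def preorder_on_def
  proof (intro conjI)
    show "refl_on F (lex_rel F)" unfolding refl_on_def lex_rel_def by auto
    show "lex_rel F \<subseteq> F \<times> F" unfolding lex_rel_def by auto
    show "trans (lex_rel F)" unfolding trans_def lex_rel_def
      using trL unfolding trans_def by blast
    show "antisym (lex_rel F)" unfolding antisym_def lex_rel_def
      using trL irr unfolding trans_def by blast
    show "total_on F (lex_rel F)" unfolding total_on_def lex_rel_def
      using lin inj by blast
  qed
  show ?thesis
  proof (subst Linear_order_Well_order_iff[OF lo], unfold lex_Field, intro allI impI)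
    fix A assume A1: "A \<subseteq> F" and A2: "A \<noteq> {}"
    have A: "A \<subseteq> F \<and> A \<noteq> {}" using A1 A2 by blast
    have "A \<subseteq> {s\<in>F. init_seg {} s}" using A init_seg_empty by blast
    then have "\<exists>m\<in>A. \<forall>s\<in>A. s = m \<or> (?L m, ?L s) \<in> lexord LT"
      by (rule front_lex_min[OF fr front_nodes_empty[OF fr] _ conjunct2[OF A]])
    then obtain m where m: "m \<in> A" and mm: "\<forall>s\<in>A. s = m \<or> (?L m, ?L s) \<in> lexord LT" by blast
    have "\<forall>a'\<in>A. (m, a') \<in> lex_rel F" using mm m A unfolding lex_rel_def by auto
    then show "\<exists>a\<in>A. \<forall>a'\<in>A. (a, a') \<in> lex_rel F" using m by blast
  qed
qed

lemma wo_ordLeq_nat: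
  assumes wo: "Well_order (r :: nat set rel)" and fin: "Field r \<subseteq> {A. finite A}"
  shows "\<exists>\<alpha>::nat rel. Well_order \<alpha> \<and> (r, \<alpha>) \<in> ordLeq"
proof -
  have "countable (Field r)" using countable_subset[OF fin countable_Collect_finite] .
  then have inj: "inj_on (to_nat_on (Field r)) (Field r)" by (rule inj_on_to_nat_on)
  define \<alpha> where "\<alpha> = dir_image r (to_nat_on (Field r))"
  have "Well_order \<alpha>" unfolding \<alpha>_def using Well_order_dir_image[OF wo inj] .
  moreover have "(r, \<alpha>) \<in> ordIso" unfolding \<alpha>_def using dir_image_ordIso[OF wo inj] .
  then have "(r, \<alpha>) \<in> ordLeq" using ordIso_iff_ordLeq by blast
  ultimately show ?thesis by blast
qed

definition dc :: "'a::order set \<Rightarrow> 'a set \<Rightarrow> 'a set" where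
  "dc P S = {x\<in>P. \<exists>y\<in>S. x \<le> y}"

lemma wqo_good:
  fixes P :: "'a::order set" and q :: "nat \<Rightarrow> 'a"
  assumes wqo: "wqo_on P (\<le>)" and Z: "infinite Z" and qP: "q ` Z \<subseteq> P"
  shows "\<exists>a\<in>Z. \<exists>b\<in>Z. a < b \<and> q a \<le> q b"
proof (rule ccontr)
  assume bad: "\<not> ?thesis"
  define col where "col S = (if q (Max S) \<le> q (Min S) then 0 else 1::nat)" for S :: "nat set"
  have "\<forall>x\<in>Z. \<forall>y\<in>Z. x \<noteq> y \<longrightarrow> col {x,y} < 2" by (simp add: col_def)
  from Ramsey2[OF Z this] obtain Y t where Y: "Y \<subseteq> Z" "infinite Y" "t < 2"
    and hom: "\<forall>x\<in>Y. \<forall>y\<in>Y. x\<noteq>y \<longrightarrow> col {x,y} = t" by blast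
  have ab: "\<not> q a \<le> q b" if "a \<in> Y" "b \<in> Y" "a < b" for a b using bad Y that by blast
  have colv: "col {a,b} = (if q b \<le> q a then 0 else 1)" if "a < b" for a b
  proof -
    have "Max {a,b} = b" "Min {a,b} = a" using that by auto
    then show ?thesis by (simp add: col_def)
  qed
  show False
  proof (cases "t = 0")
    case True
    have lt: "q b \<le> q a" if "a \<in> Y" "b \<in> Y" "a < b" for a b
      using hom that True colv[OF that(3)] by (auto split: if_splits)
    have wf: "wfp_on P (\<lambda>x y. x \<le> y \<and> \<not> y \<le> x)" using wqo by (simp add: wqo_on_def)
    have "q ` Y \<subseteq> P" "q ` Y \<noteq> {}" using Y qP infinite_imp_nonempty by auto
    then obtain z where z: "z \<in> q ` Y" and min: "\<forall>y. (y \<le> z \<and> \<not> z \<le> y) \<longrightarrow> y \<notin> q ` Y"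
      using wf unfolding wfp_on_iff_ex_minimal by blast
    then obtain a where a: "a \<in> Y" "z = q a" by blast
    obtain b where b: "b \<in> Y" "a < b" using Y(2) unfolding infinite_nat_iff_unbounded by blast
    show False using lt[OF a(1) b(1) b(2)] ab[OF a(1) b(1) b(2)] min a b by blast
  next
    case False
    then have t1: "t = 1" using Y(3) by auto
    have nle: "\<not> q a \<le> q b" if "a \<in> Y" "b \<in> Y" "a \<noteq> b" for a b
    proof (cases "a < b")
      case True then show ?thesis using ab that by blast
    next
      case False
      then have "b < a" using that by auto
      have "col {b,a} = 1" using bspec[OF bspec[OF hom that(2)] that(1)] that(3) t1 by simp
      then show ?thesis unfolding colv[OF \<open>b < a\<close>] by (simp split: if_splits)
    qed
    have inj: "inj_on q Y"
    proof (rule inj_onI)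
      fix a b assume "a \<in> Y" "b \<in> Y" "q a = q b"
      then show "a = b" using nle[of a b] by auto
    qed
    have "infinite (q ` Y)" using Y(2) finite_imageD[OF _ inj] by blast
    moreover have "q ` Y \<subseteq> P" using Y qP by auto
    moreover have "\<forall>x\<in>q`Y. \<forall>y\<in>q`Y. x \<noteq> y \<longrightarrow> \<not> x \<le> y" using nle by blast
    ultimately have ex: "\<exists>C. C \<subseteq> P \<and> infinite C \<and> (\<forall>x\<in>C. \<forall>y\<in>C. x \<noteq> y \<longrightarrow> \<not> x \<le> y)"
      by (intro exI[of _ "q`Y"]) simp
    have nA: "\<not> (\<exists>C. C \<subseteq> P \<and> infinite C \<and> (\<forall>x\<in>C. \<forall>y\<in>C. x \<noteq> y \<longrightarrow> \<not> x \<le> y))"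
      using wqo unfolding wqo_on_def by (rule conjunct2)
    show False using nA ex by (rule notE)
  qed
qed

lemma dc_mono: "S \<subseteq> T \<Longrightarrow> dc P S \<subseteq> dc P T"
  unfolding dc_def by blast

lemma wqo_stable:
  fixes P :: "'a::order set" and q :: "nat \<Rightarrow> 'a"
  assumes wqo: "wqo_on P (\<le>)" and Z: "infinite Z" and qP: "q ` Z \<subseteq> P"
  shows "\<exists>Z0\<subseteq>Z. infinite Z0 \<and> (\<forall>Y\<subseteq>Z0. infinite Y \<longrightarrow> dc P (q`Y) = dc P (q`Z0))"
proof (rule ccontr)
  assume "\<not> ?thesis"
  then have H: "\<forall>Z0. Z0 \<subseteq> Z \<and> infinite Z0 \<longrightarrow> (\<exists>Y. Y \<subseteq> Z0 \<and> infinite Y \<and> dc P (q`Y) \<noteq> dc P (q`Z0))"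
    by auto
  define nxt where "nxt Z0 = (SOME Y. Y \<subseteq> Z0 \<and> infinite Y \<and> dc P (q`Y) \<noteq> dc P (q`Z0))" for Z0
  define Zs where "Zs = rec_nat Z (\<lambda>_ Z0. nxt Z0)"
  have Zs0: "Zs 0 = Z" and ZsS: "Zs (Suc i) = nxt (Zs i)" for i by (simp_all add: Zs_def)
  have inv: "Zs i \<subseteq> Z \<and> infinite (Zs i)" for i
  proof (induction i)
    case 0 then show ?case using Z Zs0 by simp
  next
    case (Suc i)
    then have "Zs (Suc i) \<subseteq> Zs i \<and> infinite (Zs (Suc i))"
      unfolding ZsS nxt_def using someI_ex[OF H[rule_format, OF Suc]] by blast
    then show ?case using Suc by blast
  qed
  have stp: "Zs (Suc i) \<subseteq> Zs i \<and> dc P (q`Zs (Suc i)) \<noteq> dc P (q`Zs i)" for i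
    unfolding ZsS nxt_def using someI_ex[OF H[rule_format, OF inv[of i]]] by blast
  have anti: "Zs j \<subseteq> Zs i" if "i \<le> j" for i j
    using that
  proof (induction j rule: dec_induct)
    case base then show ?case by simp
  next
    case (step j) then show ?case using stp[of j] by blast
  qed
  have "\<exists>x. x \<in> dc P (q`Zs i) \<and> x \<notin> dc P (q`Zs (Suc i))" for i
    using stp[of i] dc_mono[of "q`Zs (Suc i)" "q`Zs i" P] by blast
  then obtain x where x: "\<And>i. x i \<in> dc P (q`Zs i) \<and> x i \<notin> dc P (q`Zs (Suc i))" by metis
  have "x ` UNIV \<subseteq> P" using x unfolding dc_def by blast
  then obtain i j where ij: "i < j" "x i \<le> x j" using wqo_good[OF wqo, where Z=UNIV and q=x] by auto
  have "x j \<in> dc P (q`Zs (Suc i))" using x[of j] dc_mono[of "q`Zs j" "q`Zs (Suc i)" P] anti[of "Suc i" j] ij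
    by auto
  then obtain y where "y \<in> q`Zs (Suc i)" "x j \<le> y" unfolding dc_def by blast
  moreover have "x i \<in> P" using x[of i] unfolding dc_def by blast
  ultimately have "x i \<in> dc P (q`Zs (Suc i))" using ij unfolding dc_def by (blast intro: order_trans)
  then show False using x by blast
qed

lemma wqo_limit:
  fixes P :: "'a::order set" and q :: "nat \<Rightarrow> 'a"
  assumes wqo: "wqo_on P (\<le>)" and Z: "infinite Z" and qP: "q ` Z \<subseteq> P"
  shows "\<exists>Z'\<subseteq>Z. infinite Z' \<and> ((\<exists>p. \<forall>n\<in>Z'. q n = p) \<or>
           (\<exists>C\<in>S_omega P. \<forall>Y\<subseteq>Z'. infinite Y \<longrightarrow> dc P (q`Y) = dc P C))"
proof -
  obtain Z0 where Z0: "Z0 \<subseteq> Z" "infinite Z0" and st: "\<And>Y. Y\<subseteq>Z0 \<Longrightarrow> infinite Y \<Longrightarrow> dc P (q`Y) = dc P (q`Z0)"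
    using wqo_stable[OF wqo Z qP] by blast
  define D0 where "D0 = dc P (q`Z0)"
  have qD: "q n \<in> D0" if "n \<in> Z0" for n using that Z0 qP unfolding D0_def dc_def by auto
  have D0P: "D0 \<subseteq> P" unfolding D0_def dc_def by auto
  have down: "y \<in> D0" if "x \<in> D0" "y \<in> P" "y \<le> x" for x y
    using that unfolding D0_def dc_def by (blast intro: order_trans)
  show ?thesis
  proof (cases "\<exists>p\<in>D0. \<forall>x\<in>D0. x \<le> p")
    case True
    then obtain p where p: "p \<in> D0" "\<And>x. x \<in> D0 \<Longrightarrow> x \<le> p" by blast
    define F where "F = {n\<in>Z0. q n \<noteq> p}"
    have "finite F"
    proof (rule ccontr)
      assume inf: "infinite F"
      have "p \<in> dc P (q`F)" using st[of F] inf p(1) unfolding D0_def F_def by auto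
      then obtain n where n: "n \<in> F" "p \<le> q n" unfolding dc_def by auto
      have "q n \<le> p" using p(2) qD n(1) unfolding F_def by auto
      then show False using n unfolding F_def by auto
    qed
    then have "infinite (Z0 - F)" using Z0(2) by auto
    moreover have "\<forall>n\<in>Z0 - F. q n = p" unfolding F_def by auto
    ultimately show ?thesis using Z0(1) by (intro exI[of _ "Z0 - F"]) auto
  next
    case False
    then have nomax: "\<And>p. p \<in> D0 \<Longrightarrow> \<exists>x\<in>D0. \<not> x \<le> p" by auto
    have dir: "\<exists>z\<in>D0. x \<le> z \<and> y \<le> z" if "x \<in> D0" "y \<in> D0" for x y
    proof (rule ccontr)
      assume nz: "\<not> ?thesis"
      define Y1 where "Y1 = {n\<in>Z0. \<not> x \<le> q n}"
      define Y2 where "Y2 = {n\<in>Z0. \<not> y \<le> q n}"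
      have "Z0 = Y1 \<union> Y2" using nz qD unfolding Y1_def Y2_def by auto
      then have "infinite Y1 \<or> infinite Y2" using Z0(2) by auto
      then show False
      proof
        assume "infinite Y1"
        then have "x \<in> dc P (q`Y1)" using st[of Y1] that unfolding D0_def Y1_def by auto
        then show False unfolding dc_def Y1_def by auto
      next
        assume "infinite Y2"
        then have "y \<in> dc P (q`Y2)" using st[of Y2] that unfolding D0_def Y2_def by auto
        then show False unfolding dc_def Y2_def by auto
      qed
    qed
    have stepex: "\<exists>z. z \<in> D0 \<and> a < z \<and> b \<le> z" if ab: "a \<in> D0" "b \<in> D0" for a b
    proof -
      obtain w where w: "w \<in> D0" "a \<le> w" "b \<le> w" using dir[OF ab] by blast
      obtain v where v: "v \<in> D0" "\<not> v \<le> w" using nomax[OF w(1)] by blast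
      obtain z where z: "z \<in> D0" "w \<le> z" "v \<le> z" using dir[OF w(1) v(1)] by blast
      have "a \<noteq> z" using z v w order_trans by metis
      then show ?thesis using z w by (intro exI[of _ z]) auto
    qed
    have ne: "D0 \<noteq> {}" using qD Z0(2) infinite_imp_nonempty by blast
    define c where "c = rec_nat (SOME z. z \<in> D0)
       (\<lambda>k ck. SOME z. z \<in> D0 \<and> ck < z \<and> (if k \<in> Z0 then q k else ck) \<le> z)"
    have c0: "c 0 = (SOME z. z \<in> D0)" by (simp add: c_def)
    have cS: "c (Suc k) = (SOME z. z \<in> D0 \<and> c k < z \<and> (if k \<in> Z0 then q k else c k) \<le> z)" for k
      by (simp add: c_def)
    have cD: "c k \<in> D0" for k
    proof (induction k)
      case 0 then show ?case using ne c0 some_in_eq by metis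
    next
      case (Suc k)
      have "(if k \<in> Z0 then q k else c k) \<in> D0" using Suc qD by auto
      from stepex[OF Suc this] show ?case unfolding cS by (rule someI2_ex) auto
    qed
    have cprop: "c k < c (Suc k) \<and> (k \<in> Z0 \<longrightarrow> q k \<le> c (Suc k))" for k
    proof -
      have "(if k \<in> Z0 then q k else c k) \<in> D0" using cD qD by auto
      from stepex[OF cD this] show ?thesis unfolding cS by (rule someI2_ex) auto
    qed
    have sm: "strict_mono c" using cprop by (simp add: strict_mono_Suc_iff)
    have CS: "range c \<in> S_omega P" unfolding S_omega_def using sm cD D0P by blast
    have "dc P (range c) = D0"
    proof
      show "dc P (range c) \<subseteq> D0" using cD down unfolding dc_def by blast
    next
      show "D0 \<subseteq> dc P (range c)"
      proof
        fix x assume x: "x \<in> D0"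
        then obtain n where n: "n \<in> Z0" "x \<le> q n" unfolding D0_def dc_def by blast
        then have "x \<le> c (Suc n)" using cprop[of n] order_trans by blast
        then show "x \<in> dc P (range c)" using x D0P unfolding dc_def by blast
      qed
    qed
    then have "\<forall>Y\<subseteq>Z0. infinite Y \<longrightarrow> dc P (q`Y) = dc P (range c)" using st unfolding D0_def by auto
    then show ?thesis using Z0 CS by blast
  qed
qed

inductive PV :: "nat set set \<Rightarrow> (nat set \<Rightarrow> 'a) \<Rightarrow> nat set \<Rightarrow> nat set \<Rightarrow> 'a \<Rightarrow> bool"
  for B :: "nat set set" and f :: "nat set \<Rightarrow> 'a" where
  leaf: "u \<in> B \<Longrightarrow> PV B f u Y (f u)"
| node: "u \<notin> B \<Longrightarrow> (\<forall>n\<in>Y. PV B f (insert n u) (above {n} Y) p) \<Longrightarrow> PV B f u Y p"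

definition NP :: "nat set set \<Rightarrow> (nat set \<Rightarrow> 'a::order) \<Rightarrow> 'a set \<Rightarrow> nat set \<Rightarrow> nat set \<Rightarrow> 'a set \<Rightarrow> bool" where
  "NP B f P u Y C \<longleftrightarrow> u \<notin> B \<and> C \<in> S_omega P \<and>
     (\<exists>q. (\<forall>n\<in>Y. PV B f (insert n u) (above {n} Y) (q n)) \<and>
          (\<forall>Y'\<subseteq>Y. infinite Y' \<longrightarrow> dc P (q ` Y') = dc P C))"

inductive Dead :: "nat set set \<Rightarrow> (nat set \<Rightarrow> 'a::order) \<Rightarrow> 'a set \<Rightarrow> nat set \<Rightarrow> nat set \<Rightarrow> bool"
  for B :: "nat set set" and f :: "nat set \<Rightarrow> 'a" and P :: "'a set" where
  dead: "u \<notin> B \<Longrightarrow> (\<forall>n\<in>Y. (\<exists>C. NP B f P (insert n u) (above {n} Y) C) \<or> Dead B f P (insert n u) (above {n} Y))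
     \<Longrightarrow> Dead B f P u Y"

lemma above_mono: "Y' \<subseteq> Y \<Longrightarrow> above u Y' \<subseteq> above u Y"
  unfolding above_def by auto

lemma PV_mono: "PV B f u Y p \<Longrightarrow> Y' \<subseteq> Y \<Longrightarrow> PV B f u Y' p"
proof (induction arbitrary: Y' rule: PV.induct)
  case (leaf u Y) show ?case by (rule PV.leaf[OF leaf.hyps])
next
  case (node u Y p)
  show ?case
  proof (rule PV.node[OF node.hyps(1)], intro ballI)
    fix n assume "n \<in> Y'"
    then have "n \<in> Y" using node.prems by blast
    then show "PV B f (insert n u) (above {n} Y') p"
      using node.IH above_mono[OF node.prems, of "{n}"] by blast
  qed
qed

lemma PV_cases: "PV B f u Y p \<Longrightarrow> (u \<in> B \<and> p = f u) \<or> (u \<notin> B \<and> (\<forall>n\<in>Y. PV B f (insert n u) (above {n} Y) p))"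
  by (induction rule: PV.cases) auto

lemma NP_mono: "NP B f P u Y C \<Longrightarrow> Y' \<subseteq> Y \<Longrightarrow> NP B f P u Y' C"
proof -
  assume np: "NP B f P u Y C" and sub: "Y' \<subseteq> Y"
  then obtain q where q1: "\<forall>n\<in>Y. PV B f (insert n u) (above {n} Y) (q n)"
    and q2: "\<forall>Y''\<subseteq>Y. infinite Y'' \<longrightarrow> dc P (q ` Y'') = dc P C" and u: "u \<notin> B" and C: "C \<in> S_omega P"
    unfolding NP_def by blast
  have "\<forall>n\<in>Y'. PV B f (insert n u) (above {n} Y') (q n)"
  proof
    fix n assume "n \<in> Y'"
    then have "n \<in> Y" using sub by blast
    then show "PV B f (insert n u) (above {n} Y') (q n)"
      using PV_mono[OF q1[rule_format] above_mono[OF sub]] by blast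
  qed
  moreover have "\<forall>Y''\<subseteq>Y'. infinite Y'' \<longrightarrow> dc P (q ` Y'') = dc P C" using q2 sub by blast
  ultimately have "\<exists>q. (\<forall>n\<in>Y'. PV B f (insert n u) (above {n} Y') (q n)) \<and>
          (\<forall>Y''\<subseteq>Y'. infinite Y'' \<longrightarrow> dc P (q ` Y'') = dc P C)" by (intro exI[of _ q] conjI)
  then show ?thesis unfolding NP_def using u C by (intro conjI)
qed

lemma Dead_mono: "Dead B f P u Y \<Longrightarrow> Y' \<subseteq> Y \<Longrightarrow> Dead B f P u Y'"
proof (induction arbitrary: Y' rule: Dead.induct)
  case (dead u Y)
  show ?case
  proof (rule Dead.dead[OF dead.hyps(1)], intro ballI)
    fix n assume "n \<in> Y'"
    then have n: "n \<in> Y" using dead.prems by blast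
    have sub: "above {n} Y' \<subseteq> above {n} Y" using above_mono[OF dead.prems] .
    from dead.IH n have "(\<exists>C. NP B f P (insert n u) (above {n} Y) C) \<or>
        (Dead B f P (insert n u) (above {n} Y) \<and> (\<forall>Y''. Y'' \<subseteq> above {n} Y \<longrightarrow> Dead B f P (insert n u) Y''))"
      by blast
    then show "(\<exists>C. NP B f P (insert n u) (above {n} Y') C) \<or> Dead B f P (insert n u) (above {n} Y')"
      using NP_mono[OF _ sub] sub by blast
  qed
qed

lemma Dead_cases: "Dead B f P u Y \<Longrightarrow> u \<notin> B \<and> (\<forall>n\<in>Y. (\<exists>C. NP B f P (insert n u) (above {n} Y) C) \<or> Dead B f P (insert n u) (above {n} Y))"
  by (induction rule: Dead.cases) auto

lemma infinite_above1: "infinite Y \<Longrightarrow> infinite (above {n} Y)"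
  using infinite_above[of Y "{n}"] by simp

lemma PV_P: "PV B f u Y p \<Longrightarrow> infinite Y \<Longrightarrow> f ` B \<subseteq> P \<Longrightarrow> p \<in> P"
proof (induction rule: PV.induct)
  case (leaf u Y) then show ?case by blast
next
  case (node u Y p)
  obtain n where "n \<in> Y" using node.prems(1) infinite_imp_nonempty by blast
  then show ?case using node.IH infinite_above1[OF node.prems(1)] node.prems(2) by blast
qed

lemma PV_unique: "PV B f u Y p \<Longrightarrow> PV B f u Y p' \<Longrightarrow> infinite Y \<Longrightarrow> p = p'"
proof (induction arbitrary: p' rule: PV.induct)
  case (leaf u Y)
  then show ?case using PV_cases[OF leaf.prems(1)] by blast
next
  case (node u Y p)
  obtain n where n: "n \<in> Y" using node.prems(2) infinite_imp_nonempty by blast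
  have pv': "PV B f (insert n u) (above {n} Y) p'" using PV_cases[OF node.prems(1)] node.hyps(1) n by blast
  show ?case by (rule bspec[OF node.IH n, THEN conjunct2, rule_format, OF pv' infinite_above1[OF node.prems(2)]])
qed

lemma S_omega_E: "C \<in> S_omega P \<Longrightarrow> \<exists>c::nat \<Rightarrow> _. C = range c \<and> (\<forall>i. c i \<in> P) \<and> strict_mono c"
proof -
  assume "C \<in> S_omega P"
  then obtain x :: "nat \<Rightarrow> _" where "C = range x" "\<forall>i. x i \<in> P" "strict_mono x" unfolding S_omega_def by auto
  then show ?thesis by (intro exI[of _ x]) simp
qed

lemma dc_chain_not_principal:
  assumes C: "C \<in> S_omega P" and p: "p \<in> P" and eq: "dc P {p} = dc P C"
  shows False
proof -
  obtain c :: "nat \<Rightarrow> _" where c: "C = range c" "\<forall>i. c i \<in> P" "strict_mono c" using S_omega_E[OF C] by blast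
  have "p \<in> dc P {p}" using p unfolding dc_def by blast
  then have "p \<in> dc P C" using eq by simp
  then obtain i where "p \<le> c i" unfolding dc_def c(1) by auto
  have "c (Suc i) \<in> dc P C" using c unfolding dc_def by blast
  then have "c (Suc i) \<in> dc P {p}" using eq by simp
  then have "c (Suc i) \<le> p" unfolding dc_def by simp
  moreover have "c i < c (Suc i)" using c(3) by (simp add: strict_mono_def)
  ultimately show False using \<open>p \<le> c i\<close> by simp
qed

lemma PV_not_NP:
  assumes pv: "PV B f u Y p" and np: "NP B f P u Y C" and inf: "infinite Y" and fB: "f ` B \<subseteq> P"
  shows False
proof -
  obtain q where u: "u \<notin> B" and C: "C \<in> S_omega P" and q1: "\<forall>n\<in>Y. PV B f (insert n u) (above {n} Y) (q n)"
    and q2: "\<forall>Y'\<subseteq>Y. infinite Y' \<longrightarrow> dc P (q ` Y') = dc P C" using np unfolding NP_def by blast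
  have pch: "\<forall>n\<in>Y. PV B f (insert n u) (above {n} Y) p" using PV_cases[OF pv] u by blast
  have qp: "q n = p" if "n \<in> Y" for n
    using PV_unique[of B f "insert n u" "above {n} Y" "q n" p] q1 pch that infinite_above1[OF inf] by blast
  have "q ` Y = {p}" using qp infinite_imp_nonempty[OF inf] by auto
  then have "dc P {p} = dc P C" using q2 inf by force
  moreover have "p \<in> P" using PV_P[OF pv inf fB] .
  ultimately show False using dc_chain_not_principal[OF C] by blast
qed

lemma PV_not_Dead: "PV B f u Y p \<Longrightarrow> Dead B f P u Y \<Longrightarrow> infinite Y \<Longrightarrow> f ` B \<subseteq> P \<Longrightarrow> False"
proof (induction rule: PV.induct)
  case (leaf u Y) then show ?case using Dead_cases by blast
next
  case (node u Y p)
  obtain n where n: "n \<in> Y" using node.prems(2) infinite_imp_nonempty by blast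
  have inf: "infinite (above {n} Y)" using infinite_above1[OF node.prems(2)] .
  have pv: "PV B f (insert n u) (above {n} Y) p" using bspec[OF node.IH n, THEN conjunct1] .
  have "(\<exists>C. NP B f P (insert n u) (above {n} Y) C) \<or> Dead B f P (insert n u) (above {n} Y)"
    using Dead_cases[OF node.prems(1)] n by blast
  then show ?case
  proof
    assume "\<exists>C. NP B f P (insert n u) (above {n} Y) C"
    then show False using PV_not_NP[OF pv _ inf node.prems(3)] by blast
  next
    assume "Dead B f P (insert n u) (above {n} Y)"
    then show False using bspec[OF node.IH n, THEN conjunct2, rule_format] inf node.prems(3) by blast
  qed
qed

lemma NP_not_Dead:
  assumes np: "NP B f P u Y C" and dd: "Dead B f P u Y" and inf: "infinite Y" and fB: "f ` B \<subseteq> P"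
  shows False
proof -
  obtain q where q1: "\<forall>n\<in>Y. PV B f (insert n u) (above {n} Y) (q n)" using np unfolding NP_def by blast
  obtain n where n: "n \<in> Y" using inf infinite_imp_nonempty by blast
  have inf': "infinite (above {n} Y)" using infinite_above1[OF inf] .
  have pv: "PV B f (insert n u) (above {n} Y) (q n)" using q1 n by blast
  have "(\<exists>C. NP B f P (insert n u) (above {n} Y) C) \<or> Dead B f P (insert n u) (above {n} Y)"
    using Dead_cases[OF dd] n by blast
  then show False
  proof
    assume "\<exists>C. NP B f P (insert n u) (above {n} Y) C"
    then show False using PV_not_NP[OF pv _ inf' fB] by blast
  next
    assume "Dead B f P (insert n u) (above {n} Y)"
    then show False using PV_not_Dead[OF pv _ inf' fB] by blast
  qed
qed

locale bsetup =
  fixes P :: "'a::order set" and B :: "nat set set" and f :: "nat set \<Rightarrow> 'a"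
  assumes wqo: "wqo_on P (\<le>)" and bar: "barrier B" and fB: "f ` B \<subseteq> P"
begin

lemma fr: "front B (\<Union>B)" by (rule barrier_front[OF bar])

lemma bar_thin: "s \<in> B \<Longrightarrow> t \<in> B \<Longrightarrow> \<not> s \<subset> t"
  using bar unfolding barrier_def by blast

definition status :: "nat set \<Rightarrow> nat set \<Rightarrow> bool" where
  "status u Y \<longleftrightarrow> (\<exists>p. PV B f u Y p) \<or> (\<exists>C. NP B f P u Y C) \<or> Dead B f P u Y"

lemma status_mono: "status u Y \<Longrightarrow> Y' \<subseteq> Y \<Longrightarrow> status u Y'"
  unfolding status_def using PV_mono NP_mono Dead_mono by metis

lemma status_ex:
  "\<And>Y. u \<in> nodes B \<Longrightarrow> Y \<subseteq> \<Union>B \<Longrightarrow> infinite Y \<Longrightarrow> Y \<subseteq> above u UNIV \<Longrightarrow>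
     \<exists>Y'\<subseteq>Y. infinite Y' \<and> status u Y'"
  using wf_ext[OF fr]
proof (induction u rule: wf_induct_rule)
  case (less u)
  show ?case
  proof (cases "u \<in> B")
    case True
    then have "PV B f u Y (f u)" by (rule PV.leaf)
    then have "status u Y" unfolding status_def by blast
    then show ?thesis using less.prems(3) by blast
  next
    case False
    have ch: "insert n u \<in> nodes B" "(insert n u, u) \<in> ext B" if nY: "n \<in> Y" for n
    proof -
      have "n \<in> \<Union>B" using nY less.prems(2) by blast
      moreover have "\<forall>x\<in>u. x < n" using nY less.prems(4) unfolding above_def by blast
      ultimately show "insert n u \<in> nodes B" "(insert n u, u) \<in> ext B"
        using child_ext[OF fr less.prems(1) False] by blast+
    qed
    have "\<exists>Z\<subseteq>Y. infinite Z \<and> (\<forall>n\<in>Z. (\<lambda>n W. status (insert n u) W) n (above {n} Z))"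
    proof (rule fusion[OF less.prems(3), where Phi="\<lambda>n W. status (insert n u) W"])
      show "\<And>n W W'. status (insert n u) W \<Longrightarrow> W' \<subseteq> W \<Longrightarrow> status (insert n u) W'"
        by (rule status_mono)
    next
      fix n W assume nW: "n \<in> Y" "W \<subseteq> Y" "infinite W"
      have a1: "above {n} W \<subseteq> \<Union>B" using nW(2) less.prems(2) above_sub by blast
      have a2: "infinite (above {n} W)" using infinite_above1[OF nW(3)] .
      have a3: "above {n} W \<subseteq> above (insert n u) UNIV"
      proof
        fix x assume x: "x \<in> above {n} W"
        then have "x \<in> Y" "n < x" using nW(2) unfolding above_def by auto
        then have "\<forall>y\<in>u. y < x" using less.prems(4) unfolding above_def by blast
        then show "x \<in> above (insert n u) UNIV" using \<open>n < x\<close> unfolding above_def by simp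
      qed
      have "\<exists>Y'\<subseteq>above {n} W. infinite Y' \<and> status (insert n u) Y'"
        by (rule less.IH[OF ch(2)[OF nW(1)] ch(1)[OF nW(1)] a1 a2 a3])
      then obtain Y' where "Y' \<subseteq> above {n} W" "infinite Y'" "status (insert n u) Y'"
        by blast
      then show "\<exists>W'\<subseteq>W. infinite W' \<and> status (insert n u) W'" using above_sub by blast
    qed
    then obtain Z where Z: "Z \<subseteq> Y" "infinite Z" "\<And>n. n \<in> Z \<Longrightarrow> status (insert n u) (above {n} Z)"
      by auto
    define Z1 where "Z1 = {n\<in>Z. \<exists>p. PV B f (insert n u) (above {n} Z) p}"
    define Z2 where "Z2 = {n\<in>Z. \<not> (\<exists>p. PV B f (insert n u) (above {n} Z) p)}"
    have "Z = Z1 \<union> Z2" by (auto simp: Z1_def Z2_def)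
    then have "infinite Z1 \<or> infinite Z2" using Z(2) by (metis infinite_Un)
    then show ?thesis
    proof
      assume inf1: "infinite Z1"
      define q where "q n = (SOME p. PV B f (insert n u) (above {n} Z) p)" for n
      have q: "PV B f (insert n u) (above {n} Z) (q n)" if n1: "n \<in> Z1" for n
      proof -
        have "\<exists>p. PV B f (insert n u) (above {n} Z) p" using n1 unfolding Z1_def by blast
        then show ?thesis unfolding q_def by (rule someI_ex)
      qed
      have qP: "q ` Z1 \<subseteq> P"
      proof
        fix x assume "x \<in> q ` Z1"
        then obtain n where n: "n \<in> Z1" "x = q n" by blast
        show "x \<in> P" using PV_P[OF q[OF n(1)] infinite_above1[OF Z(2)] fB] n(2) by simp
      qed
      obtain Z' where Z': "Z' \<subseteq> Z1" "infinite Z'" and alt: "(\<exists>p. \<forall>n\<in>Z'. q n = p) \<or>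
           (\<exists>C\<in>S_omega P. \<forall>Y\<subseteq>Z'. infinite Y \<longrightarrow> dc P (q`Y) = dc P C)"
        using wqo_limit[OF wqo inf1 qP] by blast
      have Z'Y: "Z' \<subseteq> Y" using Z'(1) Z(1) unfolding Z1_def by blast
      have Z'Z: "Z' \<subseteq> Z" using Z'(1) unfolding Z1_def by blast
      have chZ': "PV B f (insert n u) (above {n} Z') (q n)" if nZ': "n \<in> Z'" for n
        using PV_mono[OF q above_mono[OF Z'Z]] nZ' Z'(1) by blast
      from alt show ?thesis
      proof
        assume "\<exists>p. \<forall>n\<in>Z'. q n = p"
        then obtain p where p: "\<forall>n\<in>Z'. q n = p" by blast
        have "PV B f u Z' p"
        proof (rule PV.node[OF False], intro ballI)
          fix n assume "n \<in> Z'"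
          then show "PV B f (insert n u) (above {n} Z') p" using chZ' p by metis
        qed
        then have "status u Z'" unfolding status_def by blast
        then show ?thesis using Z'Y Z'(2) by blast
      next
        assume "\<exists>C\<in>S_omega P. \<forall>Y\<subseteq>Z'. infinite Y \<longrightarrow> dc P (q`Y) = dc P C"
        then obtain C where C: "C \<in> S_omega P" "\<forall>Y\<subseteq>Z'. infinite Y \<longrightarrow> dc P (q`Y) = dc P C" by blast
        have "\<forall>n\<in>Z'. PV B f (insert n u) (above {n} Z') (q n)" using chZ' by blast
        then have "\<exists>q. (\<forall>n\<in>Z'. PV B f (insert n u) (above {n} Z') (q n)) \<and>
          (\<forall>Y\<subseteq>Z'. infinite Y \<longrightarrow> dc P (q ` Y) = dc P C)" using C(2) by (intro exI[of _ q] conjI)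
        then have "NP B f P u Z' C" unfolding NP_def using False C(1) by (intro conjI)
        then have "status u Z'" unfolding status_def by blast
        then show ?thesis using Z'Y Z'(2) by blast
      qed
    next
      assume inf2: "infinite Z2"
      have "Dead B f P u Z2"
      proof (rule Dead.dead[OF False], intro ballI)
        fix n assume n2: "n \<in> Z2"
        then have nZ: "n \<in> Z" and npv: "\<not> (\<exists>p. PV B f (insert n u) (above {n} Z) p)" unfolding Z2_def by auto
        have sub: "above {n} Z2 \<subseteq> above {n} Z" using above_mono[of Z2 Z] unfolding Z2_def by blast
        have "(\<exists>C. NP B f P (insert n u) (above {n} Z) C) \<or> Dead B f P (insert n u) (above {n} Z)"
          using Z(3)[OF nZ] npv unfolding status_def by blast
        then show "(\<exists>C. NP B f P (insert n u) (above {n} Z2) C) \<or> Dead B f P (insert n u) (above {n} Z2)"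
          using NP_mono[OF _ sub] Dead_mono[OF _ sub] by blast
      qed
      then have "status u Z2" unfolding status_def by blast
      moreover have "Z2 \<subseteq> Y" using Z(1) unfolding Z2_def by blast
      ultimately show ?thesis using inf2 by blast
    qed
  qed
qed

end

definition shv :: "nat set \<Rightarrow> nat set \<Rightarrow> nat set \<Rightarrow> bool" where
  "shv u v r \<longleftrightarrow> finite r \<and> init_seg u r \<and> u \<noteq> r \<and> v = r - {Min r}"

lemma shv_shift: "shv u v r \<Longrightarrow> shift u v"
proof -
  assume s: "shv u v r"
  then have "finite r" "u \<subseteq> r" "v \<subseteq> r" unfolding shv_def using init_seg_subset by auto
  then have "finite u" "finite v" using finite_subset by blast+
  then show ?thesis using s unfolding shv_def shift_def by blast
qed

lemma init_seg_insert_right: "init_seg u r \<Longrightarrow> \<forall>x\<in>r. x < m \<Longrightarrow> init_seg u (insert m r)"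
  unfolding init_seg_def by (auto dest: leD)

lemma Min_insert_big:
  assumes "finite r" "r \<noteq> {}" "\<forall>x\<in>r. x < m" shows "Min (insert m r) = (Min r :: nat)"
proof -
  have "Min r < m" using Min_in[OF assms(1,2)] assms(3) by blast
  then show ?thesis using Min_insert[OF assms(1,2), of m] by simp
qed

lemma shv_extend:
  assumes "shv u v r" "\<forall>x\<in>r. x < m" "u \<noteq> {}"
  shows "shv u (insert m v) (insert m r)"
proof -
  have fr: "finite r" and i: "init_seg u r" and ne: "u \<noteq> r" and v: "v = r - {Min r}" using assms(1) unfolding shv_def by auto
  have rne: "r \<noteq> {}" using assms(3) init_seg_subset[OF i] by blast
  have mn: "Min (insert m r) = Min r" using Min_insert_big[OF fr rne assms(2)] .
  have mr: "m \<notin> r" using assms(2) by blast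
  have "Min r \<in> r" using Min_in[OF fr rne] .
  then have "m \<noteq> Min r" using mr by blast
  then have "insert m r - {Min (insert m r)} = insert m v" unfolding mn v by auto
  moreover have "u \<noteq> insert m r" using init_seg_subset[OF i] mr by blast
  ultimately show ?thesis unfolding shv_def using fr init_seg_insert_right[OF i assms(2)] by auto
qed

lemma Min_in_init: "init_seg u r \<Longrightarrow> u \<noteq> {} \<Longrightarrow> finite r \<Longrightarrow> Min r \<in> u"
proof -
  assume i: "init_seg u r" and ne: "u \<noteq> {}" and fr: "finite r"
  then obtain y where y: "y \<in> u" by blast
  then have "y \<in> r" using init_seg_subset[OF i] by blast
  then have "Min r \<le> y" "Min r \<in> r" using Min_le[OF fr] Min_in[OF fr] by blast+
  then show "Min r \<in> u" using i y unfolding init_seg_def by blast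
qed

context bsetup
begin

lemma G1:
  assumes bad: "\<And>s t. s \<in> B \<Longrightarrow> t \<in> B \<Longrightarrow> shift s t \<Longrightarrow> \<not> f s \<le> f t"
    and XA: "X \<subseteq> \<Union>B" and vB: "v \<in> B" and rX: "r \<subseteq> X"
  shows "u \<in> nodes B \<Longrightarrow> PV B f u (above u X) p \<Longrightarrow> u \<noteq> {} \<Longrightarrow> shv u v r \<Longrightarrow> \<not> p \<le> f v"
  using wf_ext[OF fr]
proof (induction u rule: wf_induct_rule)
  case (less u)
  note pc = PV_cases[OF less.prems(2)]
  show ?case
  proof (cases "u \<in> B")
    case True
    then have "p = f u" using pc by blast
    then show ?thesis using bad[OF True vB shv_shift[OF less.prems(4)]] by simp
  next
    case False
    have fr': "finite r" and i: "init_seg u r" and ne: "u \<noteq> r" and v: "v = r - {Min r}"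
      using less.prems(4) unfolding shv_def by auto
    define n where "n = Min (r - u)"
    note nx = next_elem[OF i ne fr', folded n_def]
    have nX: "n \<in> X" using nx(1) rX by blast
    have nab: "n \<in> above u X" using nX nx(3) unfolding above_def by blast
    have pvn: "PV B f (insert n u) (above (insert n u) X) p"
      using pc False nab above_above[OF nx(3)] by metis
    have nA: "n \<in> \<Union>B" using nX XA by blast
    have ch: "insert n u \<in> nodes B" "(insert n u, u) \<in> ext B"
      using child_ext[OF fr less.prems(1) False nA nx(3)] by blast+
    have "insert n u \<noteq> r"
    proof
      assume eq: "insert n u = r"
      obtain t where t: "t \<in> B" "init_seg (insert n u) t" using ch(1) unfolding nodes_def by blast
      have rne: "r \<noteq> {}" using nx(1) by blast
      have "Min r \<in> r" "Min r \<notin> v" using Min_in[OF fr' rne] v by auto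
      then have "v \<subset> t" using init_seg_subset[OF t(2)] eq v by blast
      then show False using bar_thin[OF vB t(1)] by blast
    qed
    then have "shv (insert n u) v r" using nx(4) fr' v unfolding shv_def by blast
    then show ?thesis using less.IH[OF ch(2) ch(1) pvn] by blast
  qed
qed

lemma G2:
  assumes bad: "\<And>s t. s \<in> B \<Longrightarrow> t \<in> B \<Longrightarrow> shift s t \<Longrightarrow> \<not> f s \<le> f t"
    and XA: "X \<subseteq> \<Union>B" and Xinf: "infinite X"
    and u: "u \<in> nodes B" "PV B f u (above u X) p" "u \<noteq> {}"
  shows "v \<in> nodes B \<Longrightarrow> PV B f v (above v X) q \<Longrightarrow> shv u v r \<Longrightarrow> r \<subseteq> X \<Longrightarrow> \<not> p \<le> q"
  using wf_ext[OF fr]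
proof (induction v arbitrary: r rule: wf_induct_rule)
  case (less v)
  note pc = PV_cases[OF less.prems(2)]
  show ?case
  proof (cases "v \<in> B")
    case True
    then have "q = f v" using pc by blast
    then show ?thesis using G1[OF bad XA True less.prems(4) u(1,2,3) less.prems(3)] by simp
  next
    case False
    have fr': "finite r" and i: "init_seg u r" and v: "v = r - {Min r}"
      using less.prems(3) unfolding shv_def by auto
    obtain m where mX: "m \<in> above r X" using infinite_above[OF Xinf fr'] infinite_imp_nonempty by blast
    then have m: "m \<in> X" "\<forall>x\<in>r. x < m" unfolding above_def by auto
    have mv: "\<forall>x\<in>v. x < m" using m(2) v by blast
    have mab: "m \<in> above v X" using m mv unfolding above_def by blast
    have pvm: "PV B f (insert m v) (above (insert m v) X) q"
      using pc False mab above_above[OF mv] by metis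
    have mA: "m \<in> \<Union>B" using m(1) XA by blast
    have ch: "insert m v \<in> nodes B" "(insert m v, v) \<in> ext B"
      using child_ext[OF fr less.prems(1) False mA mv] by blast+
    have "shv u (insert m v) (insert m r)" using shv_extend[OF less.prems(3) m(2) u(3)] .
    moreover have "insert m r \<subseteq> X" using less.prems(4) m(1) by blast
    ultimately show ?thesis using less.IH[OF ch(2) ch(1) pvm] by blast
  qed
qed

end

lemma dom_dc: "dom_le C D \<Longrightarrow> dc P C \<subseteq> dc P D"
  unfolding dom_le_def dc_def by (blast intro: order_trans)

lemma above_anti: "u \<subseteq> w \<Longrightarrow> above w X \<subseteq> above u X"
  unfolding above_def by blast

lemma init_seg_Max_remove:
  assumes "finite w" "w \<noteq> {}" shows "init_seg (w - {Max w}) w"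
  unfolding init_seg_def
proof (intro conjI ballI impI)
  show "w - {Max w} \<subseteq> w" by blast
next
  fix x y assume xy: "x \<in> w" "y \<in> w - {Max w}" "x \<le> y"
  have "y \<le> Max w" using Max_ge[OF assms(1)] xy(2) by blast
  then have "x \<noteq> Max w" using xy by auto
  then show "x \<in> w - {Max w}" using xy(1) by blast
qed

context bsetup
begin

lemma main_contra:
  assumes bad: "\<And>s t. s \<in> B \<Longrightarrow> t \<in> B \<Longrightarrow> shift s t \<Longrightarrow> \<not> f s \<le> f t"
    and SB: "bqo_on (S_omega P) dom_le"
  shows False
proof -
  have Ainf: "infinite (\<Union>B)" using front_inf[OF fr] .
  have eB: "{} \<notin> B"
  proof
    assume e: "{} \<in> B"
    have "infinite B" using bar unfolding barrier_def by blast
    then have "B - {{}} \<noteq> {}" by (metis finite.emptyI finite_Diff2 finite_insert)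
    then obtain t where t: "t \<in> B" "t \<noteq> {}" by blast
    then have "{} \<subset> t" by blast
    then show False using bar_thin[OF e t(1)] by blast
  qed
  have enode: "{} \<in> nodes B" using front_nodes_empty[OF fr] .
  have "\<Union>B \<subseteq> above {} UNIV" unfolding above_def by simp
  then obtain X where X: "X \<subseteq> \<Union>B" "infinite X" "status {} X"
    using status_ex[OF enode subset_refl Ainf] by blast
  have aX: "above {} X = X" unfolding above_def by simp
  have infab: "infinite (above u X)" if "finite u" for u using infinite_above[OF X(2) that] .
  have sing: "{n} \<in> nodes B" if nX: "n \<in> X" for n
  proof -
    have "n \<in> \<Union>B" using nX X(1) by blast
    then show ?thesis using child_ext(1)[OF fr enode eB, of n] by simp
  qed
  have root_pair: "\<not> pa \<le> pb" if ab: "a \<in> X" "b \<in> X" "a < b"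
      and pa: "PV B f {a} (above {a} X) pa" and pb: "PV B f {b} (above {b} X) pb" for a b pa pb
  proof -
    have "shv {a} {b} {a, b}" unfolding shv_def init_seg_def using ab(3) by auto
    moreover have "{a, b} \<subseteq> X" using ab by blast
    ultimately show ?thesis using G2[OF bad X(1) X(2) sing[OF ab(1)] pa _ sing[OF ab(2)] pb] by blast
  qed
  have pair: "\<exists>a\<in>X. \<exists>b\<in>X. a < b"
  proof -
    obtain a where a: "a \<in> X" using X(2) infinite_imp_nonempty by blast
    obtain b where "b \<in> above {a} X" using infinite_above1[OF X(2)] infinite_imp_nonempty by blast
    then show ?thesis using a unfolding above_def by auto
  qed
  consider (pv) p where "PV B f {} X p" | (np) C where "NP B f P {} X C" | (dd) "Dead B f P {} X"
    using X(3) unfolding status_def by blast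
  then show False
  proof cases
    case pv
    have ch: "\<forall>n\<in>X. PV B f {n} (above {n} X) p" using PV_cases[OF pv] eB by simp
    obtain a b where "a \<in> X" "b \<in> X" "a < b" using pair by blast
    then show False using root_pair ch by blast
  next
    case np
    then obtain q where q: "\<forall>n\<in>X. PV B f {n} (above {n} X) (q n)" unfolding NP_def by auto
    have "q ` X \<subseteq> P" using q PV_P[OF _ infinite_above1[OF X(2)] fB] by blast
    then obtain a b where "a \<in> X" "b \<in> X" "a < b" "q a \<le> q b" using wqo_good[OF wqo X(2)] by blast
    then show False using root_pair q by blast
  next
    case dd
    define Bs where "Bs = {u. u \<subseteq> X \<and> u \<in> nodes B \<and> (\<exists>C. NP B f P u (above u X) C) \<and>
       (\<forall>w. init_seg w u \<and> w \<noteq> u \<longrightarrow> Dead B f P w (above w X))}"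
    have Bs_fin: "finite u" "u \<subseteq> X" "u \<in> nodes B" if uB: "u \<in> Bs" for u
      using uB front_nodes_sub[OF fr] unfolding Bs_def by auto
    have Bs_ne: "u \<noteq> {}" if uB: "u \<in> Bs" for u
    proof
      assume "u = {}"
      then obtain C where "NP B f P {} X C" using uB aX unfolding Bs_def by auto
      then show False using NP_not_Dead[OF _ dd X(2) fB] by blast
    qed
    have f1: "\<forall>s\<in>Bs. finite s \<and> s \<subseteq> X" using Bs_fin by blast
    have f2: "\<forall>s\<in>Bs. \<forall>t\<in>Bs. init_seg s t \<longrightarrow> s = t"
    proof (intro ballI impI)
      fix s t assume st: "s \<in> Bs" "t \<in> Bs" "init_seg s t"
      show "s = t"
      proof (rule ccontr)
        assume "s \<noteq> t"
        then have "Dead B f P s (above s X)" using st unfolding Bs_def by blast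
        moreover obtain C where "NP B f P s (above s X) C" using st(1) unfolding Bs_def by blast
        ultimately show False using NP_not_Dead[OF _ _ infab[OF Bs_fin(1)[OF st(1)]] fB] by blast
      qed
    qed
    have f3: "\<forall>Z. Z \<subseteq> X \<and> infinite Z \<longrightarrow> (\<exists>s\<in>Bs. init_seg s Z)"
    proof (intro allI impI)
      fix Z assume Z: "Z \<subseteq> X \<and> infinite Z"
      then obtain s where s: "s \<in> B" "init_seg s Z" using front_pre[OF fr] X(1) by blast
      have fs: "finite s" using front_fin[OF fr s(1)] .
      have "\<not> Dead B f P s (above s X)" using Dead_cases s(1) by blast
      then have "init_seg s s \<and> \<not> Dead B f P s (above s X)" using init_seg_refl by blast
      then obtain w where w: "init_seg w s \<and> \<not> Dead B f P w (above w X)"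
        and wmin: "\<And>w'. init_seg w' s \<and> \<not> Dead B f P w' (above w' X) \<Longrightarrow> card w \<le> card w'"
        using ex_has_least_nat[of "\<lambda>w. init_seg w s \<and> \<not> Dead B f P w (above w X)" s card] by blast
      have ws: "w \<subseteq> s" using w init_seg_subset by blast
      have fw: "finite w" using ws fs finite_subset by blast
      have wne: "w \<noteq> {}" using w dd aX by auto
      have prefDead: "Dead B f P w'' (above w'' X)" if w'': "init_seg w'' w" "w'' \<noteq> w" for w''
      proof (rule ccontr)
        assume nd: "\<not> Dead B f P w'' (above w'' X)"
        have "init_seg w'' s" using w'' w init_seg_trans by blast
        then have "card w \<le> card w''" using wmin nd by blast
        moreover have "w'' \<subset> w" using w'' init_seg_subset by blast
        then have "card w'' < card w" using psubset_card_mono[OF fw] by blast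
        ultimately show False by simp
      qed
      define m where "m = Max w"
      define w' where "w' = w - {m}"
      have iw': "init_seg w' w" unfolding w'_def m_def using init_seg_Max_remove[OF fw wne] .
      have mw: "m \<in> w" unfolding m_def using Max_in[OF fw wne] .
      have w'ne: "w' \<noteq> w" unfolding w'_def using mw by blast
      have dw': "Dead B f P w' (above w' X)" using prefDead[OF iw' w'ne] .
      have lt: "\<forall>x\<in>w'. x < m" unfolding w'_def m_def using Max_ge[OF fw] by fastforce
      have sZ: "s \<subseteq> Z" using init_seg_subset[OF s(2)] .
      have wX: "w \<subseteq> X" using ws sZ Z by blast
      have mab: "m \<in> above w' X" using mw wX lt unfolding above_def by blast
      have ins: "insert m w' = w" unfolding w'_def using mw by blast
      have "(\<exists>C. NP B f P (insert m w') (above {m} (above w' X)) C) \<or> Dead B f P (insert m w') (above {m} (above w' X))"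
        using Dead_cases[OF dw'] mab by blast
      then have "(\<exists>C. NP B f P w (above w X) C) \<or> Dead B f P w (above w X)"
        unfolding above_above[OF lt] ins .
      then have npw: "\<exists>C. NP B f P w (above w X) C" using w by blast
      have "w \<in> nodes B" using w s(1) unfolding nodes_def by blast
      then have "w \<in> Bs" unfolding Bs_def using wX npw prefDead by blast
      moreover have "init_seg w Z" using w s(2) init_seg_trans by blast
      ultimately show "\<exists>s\<in>Bs. init_seg s Z" by blast
    qed
    have fBs: "front Bs X" unfolding front_def using X(2) f1 f2 f3 by blast
    define g where "g u = (SOME C. NP B f P u (above u X) C)" for u
    have gNP: "NP B f P u (above u X) (g u)" if uB: "u \<in> Bs" for u
    proof -
      have "\<exists>C. NP B f P u (above u X) C" using uB unfolding Bs_def by blast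
      then show ?thesis unfolding g_def by (rule someI_ex)
    qed
    have gS: "g u \<in> S_omega P" if uB: "u \<in> Bs" for u using gNP[OF uB] unfolding NP_def by blast
    have gbad: "\<not> dom_le (g u) (g v)" if uv: "u \<in> Bs" "v \<in> Bs" "shift u v" for u v
    proof
      assume dom: "dom_le (g u) (g v)"
      obtain r where r: "finite r" "init_seg u r" "u \<noteq> r" "v = r - {Min r}"
        using uv(3) unfolding shift_def by blast
      have sh: "shv u v r" unfolding shv_def using r by blast
      have une: "u \<noteq> {}" using Bs_ne[OF uv(1)] .
      have uX: "u \<subseteq> X" and vX: "v \<subseteq> X" using Bs_fin uv by auto
      have "Min r \<in> u" using Min_in_init[OF r(2) une r(1)] .
      then have rX: "r \<subseteq> X" using uX vX r(4) by blast
      define n where "n = Min (r - u)"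
      note nx = next_elem[OF r(2) r(3) r(1), folded n_def]
      have nX: "n \<in> X" using nx(1) rX by blast
      have nab: "n \<in> above u X" using nX nx(3) unfolding above_def by blast
      obtain q where uB: "u \<notin> B" and q1: "\<forall>k\<in>above u X. PV B f (insert k u) (above {k} (above u X)) (q k)"
        and q2: "\<forall>Y'\<subseteq>above u X. infinite Y' \<longrightarrow> dc P (q ` Y') = dc P (g u)"
        using gNP[OF uv(1)] unfolding NP_def by blast
      obtain q' where vB: "v \<notin> B" and q1': "\<forall>k\<in>above v X. PV B f (insert k v) (above {k} (above v X)) (q' k)"
        and q2': "\<forall>Y'\<subseteq>above v X. infinite Y' \<longrightarrow> dc P (q' ` Y') = dc P (g v)"
        using gNP[OF uv(2)] unfolding NP_def by blast
      have pvn: "PV B f (insert n u) (above (insert n u) X) (q n)"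
        using q1 nab above_above[OF nx(3)] by metis
      have qnP: "q n \<in> P" using PV_P[OF pvn infab fB] nx(1) uv(1) Bs_fin by (meson finite_insert)
      have "q n \<in> dc P (q ` above u X)" using qnP nab unfolding dc_def by blast
      also have "\<dots> = dc P (g u)" using q2 infab[OF Bs_fin(1)[OF uv(1)]] by blast
      also have "\<dots> \<subseteq> dc P (g v)" using dom_dc[OF dom] .
      also have "\<dots> = dc P (q' ` above r X)"
        using q2' above_anti[of v r X] r(4) infab[OF r(1)] by (metis Diff_subset)
      finally obtain m where m: "m \<in> above r X" "q n \<le> q' m" unfolding dc_def by blast
      have mr: "\<forall>x\<in>r. x < m" and mX: "m \<in> X" using m(1) unfolding above_def by auto
      have mv: "\<forall>x\<in>v. x < m" using mr r(4) by blast
      have mab: "m \<in> above v X" using mX mv unfolding above_def by blast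
      have pvm: "PV B f (insert m v) (above (insert m v) X) (q' m)"
        using q1' mab above_above[OF mv] by metis
      have nA: "n \<in> \<Union>B" and mA: "m \<in> \<Union>B" using nX mX X(1) by blast+
      have cu: "insert n u \<in> nodes B" using child_ext(1)[OF fr Bs_fin(3)[OF uv(1)] uB nA nx(3)] .
      have cv: "insert m v \<in> nodes B" using child_ext(1)[OF fr Bs_fin(3)[OF uv(2)] vB mA mv] .
      have sh2: "shv u (insert m v) (insert m r)" using shv_extend[OF sh mr une] .
      have "shv (insert n u) (insert m v) (insert m r)"
        unfolding shv_def
      proof (intro conjI)
        show "finite (insert m r)" using r(1) by simp
        show "init_seg (insert n u) (insert m r)" using init_seg_insert_right[OF nx(4) mr] .
        have "m \<notin> insert n u" using mr nx(1) init_seg_subset[OF r(2)] by auto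
        then show "insert n u \<noteq> insert m r" by blast
        show "insert m v = insert m r - {Min (insert m r)}" using sh2 unfolding shv_def by blast
      qed
      moreover have "insert m r \<subseteq> X" using rX mX by blast
      ultimately have "\<not> q n \<le> q' m" using G2[OF bad X(1) X(2) cu pvn _ cv pvm] by blast
      then show False using m(2) by blast
    qed
    define cc where "cc u = (\<exists>v\<in>Bs. v \<subset> u)" for u
    obtain Y i where Y: "Y \<subseteq> X" "infinite Y" and hom: "\<forall>u\<in>Bs. u \<subseteq> Y \<longrightarrow> cc u = i"
      using front_partition[OF fBs, of cc] by blast
    define B2 where "B2 = {u\<in>Bs. u \<subseteq> Y}"
    have B2ne: "B2 \<noteq> {}"
    proof -
      obtain u where "u \<in> Bs" "init_seg u Y" using front_pre[OF fBs Y(1) Y(2)] by blast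
      then show ?thesis unfolding B2_def using init_seg_subset by blast
    qed
    have noi: "\<not> i"
    proof
      assume i
      obtain u0 where "u0 \<in> B2" using B2ne by blast
      then obtain u where u: "u \<in> B2" and umin: "\<And>u'. u' \<in> B2 \<Longrightarrow> card u \<le> card u'"
        using ex_has_least_nat[of "\<lambda>u. u \<in> B2" u0 card] by blast
      have "cc u" using hom u \<open>i\<close> unfolding B2_def by blast
      then have "\<exists>v\<in>Bs. v \<subset> u" unfolding cc_def .
      then obtain v where v: "v \<in> Bs" "v \<subset> u" by blast
      have "v \<in> B2" using v u unfolding B2_def by blast
      moreover have "card v < card u" using psubset_card_mono[OF Bs_fin(1) v(2)] u unfolding B2_def by blast
      ultimately show False using umin by fastforce
    qed
    have B2thin: "\<not> (\<exists>v\<in>Bs. v \<subset> u)" if uB2: "u \<in> B2" for u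
    proof -
      have "cc u = i" using hom uB2 unfolding B2_def by blast
      then show ?thesis using noi unfolding cc_def by blast
    qed
    have b1: "infinite B2"
      proof
        assume finB2: "finite B2"
        have "finite (\<Union>B2)" using finB2 Bs_fin unfolding B2_def by blast
        then have "infinite (above (\<Union>B2) Y)" using infinite_above[OF Y(2)] by blast
        moreover have "above (\<Union>B2) Y \<subseteq> X" using Y(1) above_sub by blast
        ultimately obtain u where u: "u \<in> Bs" "init_seg u (above (\<Union>B2) Y)" using front_pre[OF fBs] by blast
        have uZ: "u \<subseteq> above (\<Union>B2) Y" using init_seg_subset[OF u(2)] .
        then have "u \<in> B2" using u(1) above_sub unfolding B2_def by blast
        moreover obtain x where "x \<in> u" using Bs_ne[OF u(1)] by blast
        ultimately show False using uZ unfolding above_def by blast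
      qed
    have b2: "\<forall>s\<in>B2. finite s" using Bs_fin unfolding B2_def by blast
    have b3: "\<forall>s\<in>B2. \<forall>t\<in>B2. \<not> s \<subset> t" using B2thin unfolding B2_def by blast
    have b4: "\<forall>Z. Z \<subseteq> \<Union>B2 \<and> infinite Z \<longrightarrow> (\<exists>s\<in>B2. s \<noteq> {} \<and> init_seg s Z)"
    proof (intro allI impI)
      fix Z assume Z: "Z \<subseteq> \<Union>B2 \<and> infinite Z"
      then have "Z \<subseteq> Y" unfolding B2_def by blast
      then obtain u where u: "u \<in> Bs" "init_seg u Z" using front_pre[OF fBs] Y(1) Z by blast
      have "u \<in> B2" using u init_seg_subset \<open>Z \<subseteq> Y\<close> unfolding B2_def by blast
      then show "\<exists>s\<in>B2. s \<noteq> {} \<and> init_seg s Z" using u Bs_ne by blast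
    qed
    have B2bar: "barrier B2" unfolding barrier_def using b1 b2 b3 b4 by blast
    have wo: "Well_order (lex_rel B2)" using front_lex_wo[OF barrier_front[OF B2bar]] .
    have "Field (lex_rel B2) \<subseteq> {A. finite A}" unfolding lex_Field B2_def using Bs_fin by blast
    then obtain \<alpha> :: "nat rel" where \<alpha>: "Well_order \<alpha>" "(lex_rel B2, \<alpha>) \<in> ordLeq"
      using wo_ordLeq_nat[OF wo] by blast
    have "alpha_bqo \<alpha> (S_omega P) dom_le" using SB \<alpha>(1) unfolding bqo_on_def by blast
    moreover have "g ` B2 \<subseteq> S_omega P" using gS unfolding B2_def by blast
    ultimately have "good dom_le B2 g" using B2bar \<alpha>(2) unfolding alpha_bqo_def by blast
    then obtain s t where "s \<in> B2" "t \<in> B2" "shift s t" "dom_le (g s) (g t)" unfolding good_def by blast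
    then show False using gbad unfolding B2_def by blast
  qed
qed

end

theorem theorem1p1:
  fixes P :: "'a::order set"
  assumes "wqo_on P (\<le>)"
    and "bqo_on (S_omega P) dom_le"
  shows "bqo_on P (\<le>)"
  unfolding bqo_on_def alpha_bqo_def
proof (intro allI impI)
  fix \<alpha> :: "nat rel" and B :: "nat set set" and f :: "nat set \<Rightarrow> 'a"
  assume H: "barrier B \<and> (lex_rel B, \<alpha>) \<in> ordLeq \<and> f ` B \<subseteq> P"
  show "good (\<le>) B f"
  proof (rule ccontr)
    assume ng: "\<not> good (\<le>) B f"
    interpret bsetup P B f using assms(1) H by unfold_locales auto
    have bad: "\<And>s t. s \<in> B \<Longrightarrow> t \<in> B \<Longrightarrow> shift s t \<Longrightarrow> \<not> f s \<le> f t"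
      using ng unfolding good_def by blast
    show False by (rule main_contra[OF bad assms(2)])
  qed
qed

end
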